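(* Let $p\in[1,\infty)$ and let $(\rho_t)_{t\in I}\subset L^1_{\rm loc}(\mathbb R^N)$ be non-negative. Assume that for every $\varepsilon>0$ there exists $\delta\in(0,1]$ such that $\frac{\rho_t(z)}{|z|^p}\ge\frac1{\varepsilon\delta^N}$ for a.e. $z\in B_\delta$ and every $t\in(0,\delta)$. If $(t_k)_{k\in\mathbb N}\subset I$ is infinitesimal and $(u_k)_{k\in\mathbb N}\subset L^p(\mathbb R^N)$ satisfies $\sup_k\big(\|u_k\|_{L^p}+\mathcal F_{t_k,p}(u_k)\big)<\infty$, then $(u_k)$ is locally precompact in $L^p(\mathbb R^N)$ and any of its $L^p_{\rm loc}(\mathbb R^N)$ limits belongs to $W^{\kappa,p}(\mathbb R^N)$, where $\kappa(z)=\liminf_{t\to0^+}\frac{\rho_t(z)}{|z|^p}$ for a.e. $z\in\mathbb R^N$.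
   Context: $I=(0,1)$; $B_\delta$ is the open ball of radius $\delta$ centred at $0$. For $u\in L^p(\mathbb R^N)$, $\mathcal F_{t,p}(u)=\int\int\frac{|u(x)-u(y)|^p}{|x-y|^p}\rho_t(x-y)\,dx\,dy$. For measurable $\kappa\colon\mathbb R^N\to[0,\infty]$, $W^{\kappa,p}(\mathbb R^N)=\{u\in L^p(\mathbb R^N):\int\int|u(x)-u(y)|^p\kappa(x-y)\,dx\,dy<\infty\}$. A subset of $L^p(\mathbb R^N)$ is locally precompact if it is precompact in $L^p(E)$ for every compact $E\subset\mathbb R^N$. *)

theory Defs
  imports "HOL-Analysis.Analysis"
begin

text \<open>Functions on R^N are modelled as functions on a Euclidean space 'a with
  N = DIM('a), equipped with Lebesgue measure.\<close>

definition in_Lp :: "real \<Rightarrow> ('a::euclidean_space \<Rightarrow> real) \<Rightarrow> bool" where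
  "in_Lp p u \<longleftrightarrow> u \<in> borel_measurable lebesgue \<and>
     (\<integral>\<^sup>+ x. ennreal (\<bar>u x\<bar> powr p) \<partial>lebesgue) < \<infinity>"

definition in_Lp_loc :: "real \<Rightarrow> ('a::euclidean_space \<Rightarrow> real) \<Rightarrow> bool" where
  "in_Lp_loc p u \<longleftrightarrow> u \<in> borel_measurable lebesgue \<and>
     (\<forall>K. compact K \<longrightarrow> (\<integral>\<^sup>+ x\<in>K. ennreal (\<bar>u x\<bar> powr p) \<partial>lebesgue) < \<infinity>)"

definition Lp_norm :: "real \<Rightarrow> ('a::euclidean_space \<Rightarrow> real) \<Rightarrow> real" where
  "Lp_norm p u = (\<integral> x. \<bar>u x\<bar> powr p \<partial>lebesgue) powr (1 / p)"

text \<open>p-th power of the L^p(E) distance.\<close>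
definition Lp_dist_on :: "real \<Rightarrow> 'a::euclidean_space set \<Rightarrow> ('a \<Rightarrow> real) \<Rightarrow> ('a \<Rightarrow> real) \<Rightarrow> ennreal" where
  "Lp_dist_on p E u v = (\<integral>\<^sup>+ x\<in>E. ennreal (\<bar>u x - v x\<bar> powr p) \<partial>lebesgue)"

definition F_tp :: "(real \<Rightarrow> 'a::euclidean_space \<Rightarrow> real) \<Rightarrow> real \<Rightarrow> real \<Rightarrow> ('a \<Rightarrow> real) \<Rightarrow> ennreal" where
  "F_tp \<rho> t p u = (\<integral>\<^sup>+ x. \<integral>\<^sup>+ y. ennreal (\<bar>u x - u y\<bar> powr p / norm (x - y) powr p * \<rho> t (x - y))
                      \<partial>lebesgue \<partial>lebesgue)"

definition in_W_kernel :: "('a::euclidean_space \<Rightarrow> ennreal) \<Rightarrow> real \<Rightarrow> ('a \<Rightarrow> real) \<Rightarrow> bool" where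
  "in_W_kernel \<kappa> p u \<longleftrightarrow> in_Lp p u \<and>
     (\<integral>\<^sup>+ x. \<integral>\<^sup>+ y. ennreal (\<bar>u x - u y\<bar> powr p) * \<kappa> (x - y) \<partial>lebesgue \<partial>lebesgue) < \<infinity>"

definition loc_precompact_seq :: "real \<Rightarrow> (nat \<Rightarrow> 'a::euclidean_space \<Rightarrow> real) \<Rightarrow> bool" where
  "loc_precompact_seq p u \<longleftrightarrow> (\<forall>E (r::nat\<Rightarrow>nat). compact E \<and> strict_mono r \<longrightarrow>
     (\<exists>(s::nat\<Rightarrow>nat) v. strict_mono s \<and> v \<in> borel_measurable lebesgue \<and>
        (\<integral>\<^sup>+ x\<in>E. ennreal (\<bar>v x\<bar> powr p) \<partial>lebesgue) < \<infinity> \<and>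
        (\<lambda>j. Lp_dist_on p E (u (r (s j))) v) \<longlonglongrightarrow> 0))"

end

theory Submission
  imports Defs "HOL-Library.Diagonal_Subsequence"
begin

lemma reflect_meas: "(\<lambda>y::'a::euclidean_space. x - y) \<in> lebesgue \<rightarrow>\<^sub>M lebesgue"
proof -
  have "(\<lambda>y::'a. x - y) = (\<lambda>y. x + (\<Sum>j\<in>Basis. ((-1) * (y \<bullet> j)) *\<^sub>R j))"
    by (auto simp: fun_eq_iff scaleR_minus_left sum_negf euclidean_representation)
  then show ?thesis using lebesgue_affine_measurable[of "\<lambda>_. -1" x] by simp
qed

lemma reflect_null:
  fixes N :: "'a::euclidean_space set"
  assumes "N \<in> null_sets lebesgue" shows "{y. x - y \<in> N} \<in> null_sets lebesgue"
proof -
  have "{y. x - y \<in> N} = (\<lambda>y. x - y) -` N \<inter> space lebesgue" by auto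
  also have "\<dots> \<in> sets lebesgue"
    using measurable_sets[OF reflect_meas] assms by auto
  finally have S: "{y. x - y \<in> N} \<in> sets lebesgue" .
  have "{y. x - y \<in> N} = (\<lambda>z. (-1) *\<^sub>R z + x) ` N"
    by (auto simp: image_iff) (metis add.commute diff_add_cancel minus_diff_eq scaleR_minus1_left uminus_add_conv_diff)
  moreover have "emeasure lebesgue N = 0" using assms by auto
  ultimately have "emeasure lebesgue {y. x - y \<in> N} = 0"
    using emeasure_lebesgue_affine[of "-1" x N] by simp
  with S show ?thesis by (rule null_setsI[rotated])
qed

lemma AE_reflect:
  fixes x :: "'a::euclidean_space"
  assumes "AE z in lebesgue. P z" shows "AE y in lebesgue. P (x - y)"
proof -
  from assms obtain N where N: "{z \<in> space lebesgue. \<not> P z} \<subseteq> N" "N \<in> null_sets lebesgue"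
    by (auto elim!: AE_E3 simp: eventually_ae_filter)
  have "{y \<in> space lebesgue. \<not> P (x - y)} \<subseteq> {y. x - y \<in> N}" using N by auto
  then show ?thesis using reflect_null[OF N(2), of x] by (auto intro: AE_I')
qed

lemma ae_eq_meas:
  fixes f g :: "'a::euclidean_space \<Rightarrow> 'b::topological_space"
  assumes f: "f \<in> borel_measurable lebesgue" and ae: "AE x in lebesgue. f x = g x"
  shows "g \<in> borel_measurable lebesgue"
proof (rule measurableI)
  fix A :: "'b set" assume A: "A \<in> sets borel"
  have fA: "f -` A \<inter> space lebesgue \<in> sets lebesgue" using measurable_sets[OF f A] .
  have ae2: "AE x in lebesgue. x \<in> f -` A \<inter> space lebesgue \<longleftrightarrow> x \<in> g -` A \<inter> space lebesgue"
    using ae by eventually_elim auto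
  show "g -` A \<inter> space lebesgue \<in> sets lebesgue"
    by (rule completion.in_sets_AE[OF ae2 fA]) simp
next
  show "\<And>x. x \<in> space lebesgue \<Longrightarrow> g x \<in> space borel" by simp
qed

lemma meas_F_inner:
  fixes f g :: "'a::euclidean_space \<Rightarrow> real"
  assumes f: "f \<in> borel_measurable lebesgue" and g: "g \<in> borel_measurable lebesgue"
  shows "(\<lambda>x. \<integral>\<^sup>+y. ennreal (\<bar>f x - f y\<bar> powr p / norm (x - y) powr p * g (x - y)) \<partial>lebesgue)
           \<in> borel_measurable lebesgue"
proof -
  obtain f' where f'[measurable]: "f' \<in> borel_measurable lborel" and ff': "AE x in lborel. f x = f' x"
    using completion_ex_borel_measurable_real[OF f] by auto
  obtain g' where g'[measurable]: "g' \<in> borel_measurable lborel" and gg': "AE x in lborel. g x = g' x"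
    using completion_ex_borel_measurable_real[OF g] by auto
  define G' where "G' = (\<lambda>xy::'a\<times>'a. ennreal (\<bar>f' (fst xy) - f' (snd xy)\<bar> powr p / norm (fst xy - snd xy) powr p * g' (fst xy - snd xy)))"
  have f'b[measurable]: "f' \<in> borel_measurable borel" and g'b[measurable]: "g' \<in> borel_measurable borel"
    using f' g' by simp_all
  have G'm: "G' \<in> borel_measurable (lborel \<Otimes>\<^sub>M lborel)"
    unfolding G'_def by measurable
  define H where "H = (\<lambda>x. \<integral>\<^sup>+y. G' (x,y) \<partial>lborel)"
  have "H \<in> borel_measurable lborel"
    unfolding H_def by (rule lborel.borel_measurable_nn_integral_fst[OF G'm])
  then have Hm: "H \<in> borel_measurable lebesgue" by (rule measurable_completion)
  have ffl: "AE x in lebesgue. f x = f' x" using ff' by (rule AE_completion)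
  have ggl: "AE x in lebesgue. g x = g' x" using gg' by (rule AE_completion)
  have "AE x in lebesgue. H x = (\<integral>\<^sup>+y. ennreal (\<bar>f x - f y\<bar> powr p / norm (x - y) powr p * g (x - y)) \<partial>lebesgue)"
    using ffl
  proof eventually_elim
    case (elim x)
    have "AE y in lebesgue. g (x - y) = g' (x - y)" by (rule AE_reflect[OF ggl])
    with ffl have "AE y in lebesgue. G' (x, y) = ennreal (\<bar>f x - f y\<bar> powr p / norm (x - y) powr p * g (x - y))"
      by eventually_elim (simp add: G'_def elim)
    then have "(\<integral>\<^sup>+y. ennreal (\<bar>f x - f y\<bar> powr p / norm (x - y) powr p * g (x - y)) \<partial>lebesgue)
        = (\<integral>\<^sup>+y. G' (x, y) \<partial>lebesgue)"
      by (intro nn_integral_cong_AE) auto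
    also have "\<dots> = H x" unfolding H_def by (rule nn_integral_completion)
    finally show ?case by simp
  qed
  then show ?thesis by (rule ae_eq_meas[OF Hm])
qed

lemma tangent_pos:
  fixes p a t :: real
  assumes p: "1 \<le> p" and a: "0 < a"
  shows "a powr p + p * a powr (p - 1) * (t - a) \<le> \<bar>t\<bar> powr p"
proof (cases "t > 0")
  case True
  have d: "((\<lambda>z. z powr p) has_field_derivative p * a powr (p - 1)) (at a within {0<..})"
    using has_real_derivative_powr[OF a, of p] by (rule has_field_derivative_at_within)
  have "(\<lambda>z. z powr p) t - (\<lambda>z. z powr p) a \<ge> p * a powr (p - 1) * (t - a)"
    by (rule convex_on_imp_above_tangent[OF powr_convex[OF p] _ _ _ d]) (use a True in \<open>simp_all add: interior_open\<close>)
  then show ?thesis using True by simp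
next
  case False
  have "a powr p = a powr (1 + (p - 1))" by simp
  also have "\<dots> = a powr 1 * a powr (p - 1)" by (rule powr_add)
  also have "\<dots> = a * a powr (p - 1)" using a by simp
  finally have ap: "a powr p = a * a powr (p - 1)" .
  then have "a powr p + p * a powr (p - 1) * (t - a) = a powr (p - 1) * ((1 - p) * a + p * t)"
    by (simp add: algebra_simps)
  also have "\<dots> \<le> 0"
  proof (rule mult_nonneg_nonpos)
    show "(1 - p) * a + p * t \<le> 0"
    proof -
      have "(1 - p) * a \<le> 0" using p a by (intro mult_nonpos_nonneg) auto
      moreover have "p * t \<le> 0" using p False by (intro mult_nonneg_nonpos) auto
      ultimately show ?thesis by linarith
    qed
  qed simp
  also have "0 \<le> \<bar>t\<bar> powr p" by simp
  finally show ?thesis .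
qed

lemma tangent:
  fixes p a t :: real
  assumes p: "1 \<le> p"
  shows "\<bar>a\<bar> powr p + p * \<bar>a\<bar> powr (p - 1) * sgn a * (t - a) \<le> \<bar>t\<bar> powr p"
proof (cases a "0::real" rule: linorder_cases)
  case less
  have "(-a) powr p + p * (-a) powr (p - 1) * (-t - (-a)) \<le> \<bar>-t\<bar> powr p"
    by (rule tangent_pos[OF p]) (use less in simp)
  then show ?thesis using less by (simp add: algebra_simps)
next
  case equal then show ?thesis using p by simp
next
  case greater then show ?thesis using tangent_pos[OF p greater, of t] by simp
qed

lemma powr_add_le:
  fixes p a b :: real
  assumes p: "1 \<le> p"
  shows "\<bar>a + b\<bar> powr p \<le> 2 powr (p - 1) * (\<bar>a\<bar> powr p + \<bar>b\<bar> powr p)"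
proof (cases "\<bar>a\<bar> + \<bar>b\<bar> = 0")
  case True then have "a = 0" "b = 0" by linarith+
  then show ?thesis using p by simp
next
  case False
  define m where "m = (\<bar>a\<bar> + \<bar>b\<bar>) / 2"
  have m: "0 < m" using False unfolding m_def by (metis abs_ge_zero add_nonneg_nonneg half_gt_zero_iff order_le_neq_trans)
  have 1: "m powr p + p * m powr (p - 1) * (\<bar>a\<bar> - m) \<le> \<bar>a\<bar> powr p"
    using tangent_pos[OF p m, of "\<bar>a\<bar>"] by simp
  have 2: "m powr p + p * m powr (p - 1) * (\<bar>b\<bar> - m) \<le> \<bar>b\<bar> powr p"
    using tangent_pos[OF p m, of "\<bar>b\<bar>"] by simp
  have "(\<bar>a\<bar> - m) + (\<bar>b\<bar> - m) = 0" unfolding m_def by simp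
  then have "p * m powr (p - 1) * (\<bar>a\<bar> - m) + p * m powr (p - 1) * (\<bar>b\<bar> - m) = 0"
    by (simp only: distrib_left[symmetric])
  with 1 2 have 3: "2 * m powr p \<le> \<bar>a\<bar> powr p + \<bar>b\<bar> powr p" by linarith
  have tri: "\<bar>a + b\<bar> \<le> 2 * m" unfolding m_def using abs_triangle_ineq[of a b] by simp
  have "\<bar>a + b\<bar> powr p \<le> (2 * m) powr p"
    using p tri by (intro powr_mono2) auto
  also have "\<dots> = 2 powr p * m powr p" using m by (simp add: powr_mult)
  also have "2 powr p = 2 powr (p - 1) * 2"
  proof -
    have "(2::real) powr p = 2 powr ((p - 1) + 1)" by simp
    also have "\<dots> = 2 powr (p - 1) * 2 powr 1" by (rule powr_add)
    finally show ?thesis by simp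
  qed
  also have "2 powr (p - 1) * 2 * m powr p = 2 powr (p - 1) * (2 * m powr p)" by simp
  also have "\<dots> \<le> 2 powr (p - 1) * (\<bar>a\<bar> powr p + \<bar>b\<bar> powr p)"
    by (rule mult_left_mono[OF 3]) simp
  finally show ?thesis .
qed

lemma abs_le_powr:
  fixes p a :: real
  assumes p: "1 \<le> p"
  shows "\<bar>a\<bar> \<le> 1 + \<bar>a\<bar> powr p"
proof (cases "\<bar>a\<bar> \<le> 1")
  case True then show ?thesis by (smt (verit) powr_ge_zero)
next
  case False
  then have "\<bar>a\<bar> powr 1 \<le> \<bar>a\<bar> powr p" using p by (intro powr_mono) auto
  then show ?thesis using False by simp
qed

lemma jensen_set:
  fixes g :: "'a::euclidean_space \<Rightarrow> real" and Q :: "'a set"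
  assumes p: "1 \<le> p" and Q: "Q \<in> sets lebesgue" and fin: "emeasure lebesgue Q < \<infinity>"
    and pos: "0 < measure lebesgue Q"
    and gm: "g \<in> borel_measurable lebesgue" and int: "integrable lebesgue (\<lambda>y. indicator Q y * g y)"
  shows "ennreal (measure lebesgue Q * \<bar>(\<integral>y. indicator Q y * g y \<partial>lebesgue) / measure lebesgue Q\<bar> powr p)
           \<le> (\<integral>\<^sup>+y\<in>Q. ennreal (\<bar>g y\<bar> powr p) \<partial>lebesgue)"
proof (cases "(\<integral>\<^sup>+y\<in>Q. ennreal (\<bar>g y\<bar> powr p) \<partial>lebesgue) = \<infinity>")
  case True then show ?thesis by simp
next
  case False
  define \<mu> where "\<mu> = measure lebesgue Q"
  define a where "a = (\<integral>y. indicator Q y * g y \<partial>lebesgue) / \<mu>"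
  define c where "c = p * \<bar>a\<bar> powr (p - 1) * sgn a"
  have nn: "(\<integral>\<^sup>+y\<in>Q. ennreal (\<bar>g y\<bar> powr p) \<partial>lebesgue)
      = (\<integral>\<^sup>+y. ennreal (norm (indicator Q y * \<bar>g y\<bar> powr p)) \<partial>lebesgue)"
    by (intro nn_integral_cong) (auto split: split_indicator)
  have phim: "(\<lambda>y. indicator Q y * \<bar>g y\<bar> powr p) \<in> borel_measurable lebesgue"
    using Q gm by measurable
  have intphi: "integrable lebesgue (\<lambda>y. indicator Q y * \<bar>g y\<bar> powr p)"
    by (rule integrableI_bounded[OF phim]) (use False nn in \<open>simp add: less_top\<close>)
  have intQ: "integrable lebesgue (indicator Q :: 'a \<Rightarrow> real)"
    using Q fin by simp
  have eq: "(\<lambda>y. indicator Q y * (\<bar>a\<bar> powr p + c * (g y - a)))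
      = (\<lambda>y. (\<bar>a\<bar> powr p - c * a) * indicator Q y + c * (indicator Q y * g y))"
    by (auto simp: fun_eq_iff algebra_simps split: split_indicator)
  have "(\<integral>y. indicator Q y * (\<bar>a\<bar> powr p + c * (g y - a)) \<partial>lebesgue)
       = (\<bar>a\<bar> powr p - c * a) * \<mu> + c * (\<integral>y. indicator Q y * g y \<partial>lebesgue)"
    unfolding eq using intQ int Q by (simp add: \<mu>_def)
  also have "(\<integral>y. indicator Q y * g y \<partial>lebesgue) = \<mu> * a"
    using pos by (simp add: a_def \<mu>_def)
  finally have I1: "(\<integral>y. indicator Q y * (\<bar>a\<bar> powr p + c * (g y - a)) \<partial>lebesgue) = \<mu> * \<bar>a\<bar> powr p"
    by (simp add: algebra_simps)
  have "(\<integral>y. indicator Q y * (\<bar>a\<bar> powr p + c * (g y - a)) \<partial>lebesgue)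
      \<le> (\<integral>y. indicator Q y * \<bar>g y\<bar> powr p \<partial>lebesgue)"
  proof (rule integral_mono)
    show "integrable lebesgue (\<lambda>y. indicator Q y * (\<bar>a\<bar> powr p + c * (g y - a)))"
      unfolding eq using intQ int by simp
    show "integrable lebesgue (\<lambda>y. indicator Q y * \<bar>g y\<bar> powr p)" by (rule intphi)
    fix y show "indicator Q y * (\<bar>a\<bar> powr p + c * (g y - a)) \<le> indicator Q y * \<bar>g y\<bar> powr p"
      using tangent[OF p, of a "g y"] by (auto simp: c_def split: split_indicator)
  qed
  then have I2: "\<mu> * \<bar>a\<bar> powr p \<le> (\<integral>y. indicator Q y * \<bar>g y\<bar> powr p \<partial>lebesgue)"
    using I1 by simp
  have "(\<integral>\<^sup>+y\<in>Q. ennreal (\<bar>g y\<bar> powr p) \<partial>lebesgue)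
      = (\<integral>\<^sup>+y. ennreal (indicator Q y * \<bar>g y\<bar> powr p) \<partial>lebesgue)"
    by (intro nn_integral_cong) (auto split: split_indicator)
  also have "\<dots> = ennreal (\<integral>y. indicator Q y * \<bar>g y\<bar> powr p \<partial>lebesgue)"
    by (rule nn_integral_eq_integral[OF intphi]) simp
  finally show ?thesis using I2 by (simp add: \<mu>_def a_def)
qed

definition ckey :: "real \<Rightarrow> 'a::euclidean_space \<Rightarrow> ('a \<Rightarrow> int)" where
  "ckey h x = restrict (\<lambda>b. \<lfloor>(x \<bullet> b) / h\<rfloor>) Basis"

definition cub :: "real \<Rightarrow> ('a::euclidean_space \<Rightarrow> int) \<Rightarrow> 'a set" where
  "cub h k = {x. ckey h x = k}"

lemma in_cub_iff: "y \<in> cub h k \<longleftrightarrow> ckey h y = k"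
  by (simp add: cub_def)

lemma cub_self: "x \<in> cub h (ckey h x)"
  by (simp add: cub_def)

lemma cub_coord:
  fixes x y :: "'a::euclidean_space"
  assumes h: "0 < h" and y: "y \<in> cub h (ckey h x)" and b: "b \<in> Basis"
  shows "\<bar>x \<bullet> b - y \<bullet> b\<bar> < h"
proof -
  have "\<lfloor>(x \<bullet> b) / h\<rfloor> = \<lfloor>(y \<bullet> b) / h\<rfloor>"
    using y b unfolding cub_def ckey_def by (metis (mono_tags, lifting) mem_Collect_eq restrict_apply')
  then have "\<bar>(x \<bullet> b) / h - (y \<bullet> b) / h\<bar> < 1"
    by (smt (verit, best) floor_eq_iff)
  moreover have "\<bar>x \<bullet> b - y \<bullet> b\<bar> = h * \<bar>(x \<bullet> b) / h - (y \<bullet> b) / h\<bar>"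
  proof -
    have "x \<bullet> b - y \<bullet> b = h * ((x \<bullet> b) / h - (y \<bullet> b) / h)" using h by (simp add: right_diff_distrib)
    then show ?thesis using h by (simp add: abs_mult)
  qed
  ultimately show ?thesis using h by (metis mult.right_neutral mult_strict_left_mono)
qed

lemma cub_dist:
  fixes x y :: "'a::euclidean_space"
  assumes h: "0 < h" and y: "y \<in> cub h (ckey h x)"
  shows "norm (x - y) < real DIM('a) * h"
proof -
  have "norm (x - y) \<le> (\<Sum>b\<in>Basis. \<bar>(x - y) \<bullet> b\<bar>)" by (rule norm_le_l1)
  also have "\<dots> < (\<Sum>b\<in>(Basis::'a set). h)"
  proof (rule sum_strict_mono)
    fix b :: 'a assume "b \<in> Basis"
    then show "\<bar>(x - y) \<bullet> b\<bar> < h" using cub_coord[OF h y] by (simp add: inner_diff_left)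
  qed auto
  also have "\<dots> = real DIM('a) * h" by simp
  finally show ?thesis .
qed

lemma cub_explicit:
  fixes k :: "'a::euclidean_space \<Rightarrow> int"
  assumes h: "0 < h" and k: "k \<in> extensional Basis"
  shows "cub h k = {x. \<forall>b\<in>Basis. real_of_int (k b) * h \<le> x \<bullet> b \<and> x \<bullet> b < (real_of_int (k b) + 1) * h}"
proof -
  have "ckey h x = k \<longleftrightarrow> (\<forall>b\<in>Basis. \<lfloor>(x \<bullet> b) / h\<rfloor> = k b)" for x
    using k unfolding ckey_def by (auto simp: fun_eq_iff extensional_def)
  moreover have "\<lfloor>(x \<bullet> b) / h\<rfloor> = k b \<longleftrightarrow> real_of_int (k b) * h \<le> x \<bullet> b \<and> x \<bullet> b < (real_of_int (k b) + 1) * h" for x b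
    using h by (simp add: floor_eq_iff pos_le_divide_eq pos_divide_less_eq)
  ultimately show ?thesis by (auto simp: cub_def)
qed

lemma cub_sets: fixes k :: "'a::euclidean_space \<Rightarrow> int" assumes h: "0 < h" shows "cub h k \<in> sets lebesgue"
proof (cases "k \<in> extensional Basis")
  case True
  have "{x::'a. \<forall>b\<in>Basis. real_of_int (k b) * h \<le> x \<bullet> b \<and> x \<bullet> b < (real_of_int (k b) + 1) * h} \<in> sets borel"
    by measurable
  then show ?thesis using cub_explicit[OF h True] by simp
next
  case False
  then have "cub h k = {}" unfolding cub_def ckey_def by auto
  then show ?thesis by simp
qed

lemma cub_ball:
  fixes x :: "'a::euclidean_space"
  assumes h: "0 < h"
  defines "c \<equiv> (\<Sum>b\<in>Basis. ((real_of_int (ckey h x b) + 1/2) * h) *\<^sub>R b)"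
  shows "ball c (h/2) \<subseteq> cub h (ckey h x)"
proof
  fix y assume y: "y \<in> ball c (h/2)"
  have "\<lfloor>(y \<bullet> b) / h\<rfloor> = ckey h x b" if b: "b \<in> Basis" for b
  proof -
    have cb: "c \<bullet> b = (real_of_int (ckey h x b) + 1/2) * h"
      unfolding c_def using b by (simp add: inner_sum_left inner_Basis if_distrib sum.delta cong: if_cong)
    have "\<bar>(y - c) \<bullet> b\<bar> \<le> norm (y - c)" by (rule Basis_le_norm[OF b])
    also have "\<dots> < h/2" using y by (simp add: dist_norm norm_minus_commute)
    finally have "\<bar>y \<bullet> b - c \<bullet> b\<bar> < h/2" by (simp add: inner_diff_left)
    then have "y \<bullet> b - c \<bullet> b < h/2 \<and> -(y \<bullet> b - c \<bullet> b) < h/2" by (simp only: abs_less_iff)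
    then have lt: "y \<bullet> b - c \<bullet> b < h/2" and gt: "-(h/2) < y \<bullet> b - c \<bullet> b" by linarith+
    have cb2: "c \<bullet> b = real_of_int (ckey h x b) * h + h/2" using cb by (simp add: algebra_simps)
    have "real_of_int (ckey h x b) * h \<le> y \<bullet> b" using gt cb2 by linarith
    moreover have "y \<bullet> b < (real_of_int (ckey h x b) + 1) * h" using lt cb2 by (simp add: algebra_simps)
    ultimately have "real_of_int (ckey h x b) * h \<le> y \<bullet> b \<and> y \<bullet> b < (real_of_int (ckey h x b) + 1) * h" by blast
    then show ?thesis
      using h by (simp add: floor_eq_iff pos_le_divide_eq pos_divide_less_eq)
  qed
  then have "ckey h y = ckey h x"
    unfolding ckey_def by (auto simp: fun_eq_iff)
  then show "y \<in> cub h (ckey h x)" by (simp add: cub_def)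
qed

lemma cub_measure_lower:
  assumes h: "0 < h"
  shows "unit_ball_vol (DIM('a)) * (h/2) ^ DIM('a) \<le> measure lebesgue (cub h (ckey h (x::'a::euclidean_space)))"
proof -
  obtain c :: 'a where c: "ball c (h/2) \<subseteq> cub h (ckey h x)" using cub_ball[OF h] by blast
  have "cub h (ckey h x) \<subseteq> cball x (real DIM('a) * h)"
  proof
    fix y assume y: "y \<in> cub h (ckey h x)"
    show "y \<in> cball x (real DIM('a) * h)" using cub_dist[OF h y] by (simp add: dist_norm)
  qed
  then have fin: "cub h (ckey h x) \<in> lmeasurable"
    by (intro bounded_set_imp_lmeasurable cub_sets[OF h]) (rule bounded_subset[OF bounded_cball])
  have "measure lebesgue (ball c (h/2)) \<le> measure lebesgue (cub h (ckey h x))"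
    by (rule measure_mono_fmeasurable[OF _ _ fin]) (use c in auto)
  then show ?thesis using content_ball[of "h/2" c] h by simp
qed

lemma cub_lmeasurable:
  fixes x :: "'a::euclidean_space"
  assumes h: "0 < h"
  shows "cub h (ckey h x) \<in> lmeasurable"
proof -
  have "cub h (ckey h x) \<subseteq> cball x (real DIM('a) * h)"
  proof
    fix y assume y: "y \<in> cub h (ckey h x)"
    show "y \<in> cball x (real DIM('a) * h)" using cub_dist[OF h y] by (simp add: dist_norm)
  qed
  then show ?thesis
    by (intro bounded_set_imp_lmeasurable cub_sets[OF h]) (rule bounded_subset[OF bounded_cball])
qed

lemma cub_pos:
  assumes h: "0 < h"
  shows "0 < measure lebesgue (cub h (ckey h (x::'a::euclidean_space)))"
proof -
  have "0 < unit_ball_vol (DIM('a)) * (h/2) ^ DIM('a)" using h by simp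
  then show ?thesis using cub_measure_lower[OF h, of x] by linarith
qed

lemma ckey_finite:
  fixes E :: "'a::euclidean_space set"
  assumes h: "0 < h" and E: "compact E"
  shows "finite (ckey h ` E)"
proof -
  obtain R where R: "\<And>x. x \<in> E \<Longrightarrow> norm x \<le> R"
    using compact_imp_bounded[OF E] by (auto simp: bounded_iff)
  have "ckey h ` E \<subseteq> (\<Pi>\<^sub>E b\<in>Basis. {\<lfloor>-R/h\<rfloor>..\<lfloor>R/h\<rfloor>})"
  proof
    fix k assume "k \<in> ckey h ` E"
    then obtain x where x: "x \<in> E" and k: "k = ckey h x" by auto
    have "\<lfloor>(x \<bullet> b) / h\<rfloor> \<in> {\<lfloor>-R/h\<rfloor>..\<lfloor>R/h\<rfloor>}" if b: "b \<in> Basis" for b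
    proof -
      have "\<bar>x \<bullet> b\<bar> \<le> R" using Basis_le_norm[OF b, of x] R[OF x] by linarith
      then have "-R \<le> x \<bullet> b" "x \<bullet> b \<le> R" by linarith+
      then have "-R/h \<le> (x \<bullet> b)/h" "(x \<bullet> b)/h \<le> R/h"
        using divide_right_mono[of "-R" "x \<bullet> b" h] divide_right_mono[of "x \<bullet> b" R h] h by auto
      then show ?thesis by (auto intro: floor_mono)
    qed
    then show "k \<in> (\<Pi>\<^sub>E b\<in>Basis. {\<lfloor>-R/h\<rfloor>..\<lfloor>R/h\<rfloor>})"
      unfolding k ckey_def by auto
  qed
  moreover have "finite (\<Pi>\<^sub>E b\<in>(Basis::'a set). {\<lfloor>-R/h\<rfloor>..\<lfloor>R/h\<rfloor>})"
    by (intro finite_PiE) auto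
  ultimately show ?thesis by (rule finite_subset)
qed

definition avg :: "real \<Rightarrow> ('a::euclidean_space \<Rightarrow> real) \<Rightarrow> ('a \<Rightarrow> int) \<Rightarrow> real" where
  "avg h f k = (\<integral>y. indicator (cub h k) y * f y \<partial>lebesgue) / measure lebesgue (cub h k)"

definition Pr :: "real \<Rightarrow> 'a::euclidean_space set \<Rightarrow> ('a \<Rightarrow> real) \<Rightarrow> 'a \<Rightarrow> real" where
  "Pr h E f x = (\<Sum>k\<in>ckey h ` E. indicator (cub h k) x * avg h f k)"

lemma Pr_on:
  assumes fin: "finite (ckey h ` E)" and x: "x \<in> E"
  shows "Pr h E f x = avg h f (ckey h x)"
proof -
  have "Pr h E f x = (\<Sum>k\<in>ckey h ` E. if ckey h x = k then avg h f k else 0)"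
    unfolding Pr_def by (intro sum.cong) (auto simp: indicator_def in_cub_iff)
  also have "\<dots> = avg h f (ckey h x)"
    using fin x by (simp add: sum.delta)
  finally show ?thesis .
qed

lemma Pr_meas:
  assumes h: "0 < h"
  shows "Pr h E f \<in> borel_measurable lebesgue"
  unfolding Pr_def
  by (intro borel_measurable_sum borel_measurable_times borel_measurable_indicator cub_sets[OF h]
      borel_measurable_const)

lemma integrable_set_fin:
  fixes f :: "'a::euclidean_space \<Rightarrow> real"
  assumes p: "1 \<le> p" and fm: "f \<in> borel_measurable lebesgue"
    and fin: "(\<integral>\<^sup>+x. ennreal (\<bar>f x\<bar> powr p) \<partial>lebesgue) < \<infinity>"
    and Q: "Q \<in> sets lebesgue" and Qf: "emeasure lebesgue Q < \<infinity>"
  shows "integrable lebesgue (\<lambda>y. indicator Q y * f y)"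
proof (rule integrableI_bounded)
  show "(\<lambda>y. indicator Q y * f y) \<in> borel_measurable lebesgue"
    using fm Q by measurable
  have "(\<integral>\<^sup>+y. ennreal (norm (indicator Q y * f y)) \<partial>lebesgue)
      \<le> (\<integral>\<^sup>+y. indicator Q y + ennreal (\<bar>f y\<bar> powr p) \<partial>lebesgue)"
  proof (rule nn_integral_mono)
    fix y
    have "norm (indicator Q y * f y) \<le> indicator Q y + \<bar>f y\<bar> powr p"
      using abs_le_powr[OF p, of "f y"] by (auto split: split_indicator)
    then have "ennreal (norm (indicator Q y * f y)) \<le> ennreal (indicator Q y + \<bar>f y\<bar> powr p)"
      by (rule ennreal_leI)
    also have "\<dots> = indicator Q y + ennreal (\<bar>f y\<bar> powr p)"
      using ennreal_plus[of "indicator Q y" "\<bar>f y\<bar> powr p"] by (simp add: ennreal_indicator)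
    finally show "ennreal (norm (indicator Q y * f y)) \<le> indicator Q y + ennreal (\<bar>f y\<bar> powr p)" .
  qed
  also have "\<dots> = emeasure lebesgue Q + (\<integral>\<^sup>+y. ennreal (\<bar>f y\<bar> powr p) \<partial>lebesgue)"
    using Q fm by (subst nn_integral_add) auto
  also have "\<dots> < \<infinity>" using Qf fin by simp
  finally show "(\<integral>\<^sup>+y. ennreal (norm (indicator Q y * f y)) \<partial>lebesgue) < \<infinity>" .
qed

lemma integrable_powr_fin:
  fixes f :: "'a::euclidean_space \<Rightarrow> real"
  assumes fm: "f \<in> borel_measurable lebesgue"
    and fin: "(\<integral>\<^sup>+x. ennreal (\<bar>f x\<bar> powr p) \<partial>lebesgue) < \<infinity>"
  shows "integrable lebesgue (\<lambda>y. \<bar>f y\<bar> powr p)"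
proof (rule integrableI_bounded)
  show "(\<lambda>y. \<bar>f y\<bar> powr p) \<in> borel_measurable lebesgue" using fm by measurable
  show "(\<integral>\<^sup>+y. ennreal (norm (\<bar>f y\<bar> powr p)) \<partial>lebesgue) < \<infinity>" using fin by simp
qed

lemma avg_bound:
  fixes f :: "'a::euclidean_space \<Rightarrow> real"
  assumes p: "1 \<le> p" and fm: "f \<in> borel_measurable lebesgue" and h: "0 < h"
    and M: "(\<integral>\<^sup>+x. ennreal (\<bar>f x\<bar> powr p) \<partial>lebesgue) \<le> ennreal M" and M0: "0 \<le> M"
  shows "\<bar>avg h f (ckey h x)\<bar> \<le> (measure lebesgue (cub h (ckey h x)) + M) / measure lebesgue (cub h (ckey h x))"
proof -
  define Q where "Q = cub h (ckey h x)"
  have Ql: "Q \<in> lmeasurable" unfolding Q_def by (rule cub_lmeasurable[OF h])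
  then have Qs: "Q \<in> sets lebesgue" and Qf: "emeasure lebesgue Q < \<infinity>" by (auto simp: fmeasurable_def)
  have Qp: "0 < measure lebesgue Q" unfolding Q_def by (rule cub_pos[OF h])
  have fin: "(\<integral>\<^sup>+x. ennreal (\<bar>f x\<bar> powr p) \<partial>lebesgue) < \<infinity>" using M by (simp add: le_less_trans)
  have intQf: "integrable lebesgue (\<lambda>y. indicator Q y * f y)"
    by (rule integrable_set_fin[OF p fm fin Qs Qf])
  have intp: "integrable lebesgue (\<lambda>y. \<bar>f y\<bar> powr p)" by (rule integrable_powr_fin[OF fm fin])
  have intQ: "integrable lebesgue (indicator Q :: 'a \<Rightarrow> real)" using Qs Qf by simp
  have "\<bar>\<integral>y. indicator Q y * f y \<partial>lebesgue\<bar> \<le> (\<integral>y. norm (indicator Q y * f y) \<partial>lebesgue)"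
    using integral_norm_bound[of lebesgue "\<lambda>y. indicator Q y * f y"] by simp
  also have "\<dots> \<le> (\<integral>y. indicator Q y + \<bar>f y\<bar> powr p \<partial>lebesgue)"
  proof (rule integral_mono)
    show "integrable lebesgue (\<lambda>y. norm (indicator Q y * f y))" using intQf by simp
    show "integrable lebesgue (\<lambda>y. indicator Q y + \<bar>f y\<bar> powr p)" using intQ intp by simp
    fix y show "norm (indicator Q y * f y) \<le> indicator Q y + \<bar>f y\<bar> powr p"
      using abs_le_powr[OF p, of "f y"] by (auto split: split_indicator)
  qed
  also have "\<dots> = measure lebesgue Q + (\<integral>y. \<bar>f y\<bar> powr p \<partial>lebesgue)"
    using intQ intp Qs by simp
  also have "(\<integral>y. \<bar>f y\<bar> powr p \<partial>lebesgue) \<le> M"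
  proof -
    have "ennreal (\<integral>y. \<bar>f y\<bar> powr p \<partial>lebesgue) = (\<integral>\<^sup>+x. ennreal (\<bar>f x\<bar> powr p) \<partial>lebesgue)"
      by (rule nn_integral_eq_integral[OF intp, symmetric]) simp
    then show ?thesis using M M0 by (metis ennreal_le_iff)
  qed
  finally have "\<bar>\<integral>y. indicator Q y * f y \<partial>lebesgue\<bar> \<le> measure lebesgue Q + M" by simp
  then show ?thesis unfolding avg_def Q_def[symmetric] using Qp
    by (simp add: abs_divide divide_right_mono)
qed

lemma pointwise_est:
  fixes f :: "'a::euclidean_space \<Rightarrow> real"
  assumes p: "1 \<le> p" and fm: "f \<in> borel_measurable lebesgue" and h: "0 < h"
    and fin: "(\<integral>\<^sup>+x. ennreal (\<bar>f x\<bar> powr p) \<partial>lebesgue) < \<infinity>"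
  shows "ennreal (\<bar>f x - avg h f (ckey h x)\<bar> powr p)
     \<le> ennreal (1 / measure lebesgue (cub h (ckey h x))) *
        (\<integral>\<^sup>+y\<in>cub h (ckey h x). ennreal (\<bar>f x - f y\<bar> powr p) \<partial>lebesgue)"
proof -
  define Q where "Q = cub h (ckey h x)"
  define \<mu> where "\<mu> = measure lebesgue Q"
  have Ql: "Q \<in> lmeasurable" unfolding Q_def by (rule cub_lmeasurable[OF h])
  then have Qs: "Q \<in> sets lebesgue" and Qf: "emeasure lebesgue Q < \<infinity>" by (auto simp: fmeasurable_def)
  have Qp: "0 < \<mu>" unfolding Q_def \<mu>_def by (rule cub_pos[OF h])
  have intQf: "integrable lebesgue (\<lambda>y. indicator Q y * f y)"
    by (rule integrable_set_fin[OF p fm fin Qs Qf])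
  have intQ: "integrable lebesgue (indicator Q :: 'a \<Rightarrow> real)" using Qs Qf by simp
  have eqg: "(\<lambda>y. indicator Q y * (f x - f y)) = (\<lambda>y. f x * indicator Q y - indicator Q y * f y)"
    by (auto simp: fun_eq_iff algebra_simps)
  have intg: "integrable lebesgue (\<lambda>y. indicator Q y * (f x - f y))"
    unfolding eqg using intQ intQf by simp
  have gm: "(\<lambda>y. f x - f y) \<in> borel_measurable lebesgue" using fm by measurable
  have I: "(\<integral>y. indicator Q y * (f x - f y) \<partial>lebesgue) / \<mu> = f x - avg h f (ckey h x)"
  proof -
    have "(\<integral>y. indicator Q y * (f x - f y) \<partial>lebesgue) = f x * \<mu> - (\<integral>y. indicator Q y * f y \<partial>lebesgue)"
      unfolding eqg using intQ intQf Qs by (simp add: \<mu>_def)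
    then show ?thesis using Qp unfolding avg_def Q_def[symmetric] \<mu>_def[symmetric]
      by (simp add: diff_divide_distrib)
  qed
  have J: "ennreal (\<mu> * \<bar>f x - avg h f (ckey h x)\<bar> powr p)
      \<le> (\<integral>\<^sup>+y\<in>Q. ennreal (\<bar>f x - f y\<bar> powr p) \<partial>lebesgue)"
    using jensen_set[OF p Qs Qf _ gm intg] Qp I unfolding \<mu>_def by simp
  have "ennreal (\<bar>f x - avg h f (ckey h x)\<bar> powr p)
      = ennreal (1 / \<mu>) * ennreal (\<mu> * \<bar>f x - avg h f (ckey h x)\<bar> powr p)"
    using Qp by (simp add: ennreal_mult[symmetric])
  also have "\<dots> \<le> ennreal (1 / \<mu>) * (\<integral>\<^sup>+y\<in>Q. ennreal (\<bar>f x - f y\<bar> powr p) \<partial>lebesgue)"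
    by (rule mult_left_mono[OF J]) simp
  finally show ?thesis unfolding \<mu>_def Q_def .
qed

lemma est_F:
  fixes f g :: "'a::euclidean_space \<Rightarrow> real" and E :: "'a set"
  assumes p: "1 \<le> p" and fm: "f \<in> borel_measurable lebesgue"
    and fin: "(\<integral>\<^sup>+x. ennreal (\<bar>f x\<bar> powr p) \<partial>lebesgue) < \<infinity>"
    and gm: "g \<in> borel_measurable lebesgue" and gnn: "\<And>z. 0 \<le> g z"
    and h: "0 < h" and hd: "real DIM('a) * h \<le> \<delta>" and eta: "0 < \<eta>"
    and low: "AE z in lebesgue. z \<in> ball 0 \<delta> \<longrightarrow> g z / norm z powr p \<ge> 1 / (\<eta> * \<delta> ^ DIM('a))"
    and Efin: "finite (ckey h ` E)"
  shows "Lp_dist_on p E f (Pr h E f) \<le>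
    ennreal (\<eta> * \<delta> ^ DIM('a) / (unit_ball_vol (DIM('a)) * (h/2) ^ DIM('a))) *
    (\<integral>\<^sup>+x. \<integral>\<^sup>+y. ennreal (\<bar>f x - f y\<bar> powr p / norm (x - y) powr p * g (x - y)) \<partial>lebesgue \<partial>lebesgue)"
proof -
  define G where "G x y = ennreal (\<bar>f x - f y\<bar> powr p / norm (x - y) powr p * g (x - y))" for x y
  define c0 where "c0 = \<eta> * \<delta> ^ DIM('a)"
  define \<omega> where "\<omega> = unit_ball_vol (DIM('a)) * (h/2) ^ DIM('a)"
  define K0 where "K0 = c0 / \<omega>"
  have dpos: "0 < \<delta>"
    using h hd by (smt (verit) DIM_positive of_nat_0_less_iff mult_pos_pos)
  have c0: "0 < c0" unfolding c0_def using eta dpos by simp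
  have om: "0 < \<omega>" unfolding \<omega>_def using h by simp
  have step: "ennreal (\<bar>f x - Pr h E f x\<bar> powr p) * indicator E x \<le> ennreal K0 * (\<integral>\<^sup>+y. G x y \<partial>lebesgue)" for x
  proof (cases "x \<in> E")
    case False then show ?thesis by simp
  next
    case True
    define Q where "Q = cub h (ckey h x)"
    define \<mu> where "\<mu> = measure lebesgue Q"
    have mu: "\<omega> \<le> \<mu>" unfolding \<mu>_def Q_def \<omega>_def by (rule cub_measure_lower[OF h])
    have gx[measurable]: "(\<lambda>y. g (x - y)) \<in> borel_measurable lebesgue"
      by (rule measurable_compose[OF reflect_meas gm])
    have "(\<lambda>y. norm (x - y) powr p) \<in> borel_measurable lborel" by measurable
    then have nx[measurable]: "(\<lambda>y. norm (x - y) powr p) \<in> borel_measurable lebesgue"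
      by (rule measurable_completion)
    have fd[measurable]: "(\<lambda>y. \<bar>f x - f y\<bar> powr p) \<in> borel_measurable lebesgue" using fm by measurable
    have "(\<lambda>y. \<bar>f x - f y\<bar> powr p / norm (x - y) powr p * g (x - y)) \<in> borel_measurable lebesgue"
      by (intro borel_measurable_times borel_measurable_divide fd nx gx)
    then have Gm: "G x \<in> borel_measurable lebesgue" unfolding G_def by measurable
    have "ennreal (\<bar>f x - Pr h E f x\<bar> powr p) * indicator E x = ennreal (\<bar>f x - avg h f (ckey h x)\<bar> powr p)"
      using True Pr_on[OF Efin True] by simp
    also have "\<dots> \<le> ennreal (1 / \<mu>) * (\<integral>\<^sup>+y\<in>Q. ennreal (\<bar>f x - f y\<bar> powr p) \<partial>lebesgue)"
      unfolding \<mu>_def Q_def by (rule pointwise_est[OF p fm h fin])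
    also have "(\<integral>\<^sup>+y\<in>Q. ennreal (\<bar>f x - f y\<bar> powr p) \<partial>lebesgue) \<le> (\<integral>\<^sup>+y. ennreal c0 * G x y \<partial>lebesgue)"
    proof (rule nn_integral_mono_AE)
      have "AE y in lebesgue. x - y \<in> ball 0 \<delta> \<longrightarrow> g (x - y) / norm (x - y) powr p \<ge> 1 / c0"
        using AE_reflect[OF low, of x] unfolding c0_def .
      then show "AE y in lebesgue. ennreal (\<bar>f x - f y\<bar> powr p) * indicator Q y \<le> ennreal c0 * G x y"
      proof eventually_elim
        case (elim y)
        show ?case
        proof (cases "y \<in> Q")
          case False then show ?thesis by simp
        next
          case yQ: True
          have "norm (x - y) < \<delta>" using cub_dist[OF h yQ[unfolded Q_def]] hd by linarith
          then have "x - y \<in> ball 0 \<delta>" by simp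
          then have q: "1 / c0 \<le> g (x - y) / norm (x - y) powr p" using elim by simp
          define a where "a = \<bar>f x - f y\<bar> powr p"
          define qq where "qq = g (x - y) / norm (x - y) powr p"
          have a0: "0 \<le> a" unfolding a_def by simp
          have "1 \<le> c0 * qq" using q c0 unfolding qq_def by (simp add: divide_le_eq mult.commute)
          then have "a * 1 \<le> a * (c0 * qq)" using a0 by (intro mult_left_mono) auto
          also have "a * (c0 * qq) = c0 * (\<bar>f x - f y\<bar> powr p / norm (x - y) powr p * g (x - y))"
            unfolding a_def qq_def by (simp add: field_simps)
          finally have le: "a \<le> c0 * (\<bar>f x - f y\<bar> powr p / norm (x - y) powr p * g (x - y))" by simp
          have "ennreal a \<le> ennreal (c0 * (\<bar>f x - f y\<bar> powr p / norm (x - y) powr p * g (x - y)))"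
            by (rule ennreal_leI[OF le])
          also have "\<dots> = ennreal c0 * G x y"
            unfolding G_def using c0 by (intro ennreal_mult') simp
          finally show ?thesis using yQ by (simp add: a_def)
        qed
      qed
    qed
    also have "(\<integral>\<^sup>+y. ennreal c0 * G x y \<partial>lebesgue) = ennreal c0 * (\<integral>\<^sup>+y. G x y \<partial>lebesgue)"
      by (rule nn_integral_cmult[OF Gm])
    also have "ennreal (1 / \<mu>) * (ennreal c0 * (\<integral>\<^sup>+y. G x y \<partial>lebesgue))
        = ennreal (c0 / \<mu>) * (\<integral>\<^sup>+y. G x y \<partial>lebesgue)"
      using c0 om mu by (simp add: ennreal_mult[symmetric] mult.assoc[symmetric])
    also have "\<dots> \<le> ennreal K0 * (\<integral>\<^sup>+y. G x y \<partial>lebesgue)"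
    proof (rule mult_right_mono)
      have "c0 / \<mu> \<le> c0 / \<omega>" using c0 om mu by (intro divide_left_mono) auto
      then show "ennreal (c0 / \<mu>) \<le> ennreal K0" unfolding K0_def by (rule ennreal_leI)
    qed simp
    finally show ?thesis by (simp add: mult_left_mono)
  qed
  have "Lp_dist_on p E f (Pr h E f) = (\<integral>\<^sup>+x. ennreal (\<bar>f x - Pr h E f x\<bar> powr p) * indicator E x \<partial>lebesgue)"
    unfolding Lp_dist_on_def by simp
  also have "\<dots> \<le> (\<integral>\<^sup>+x. ennreal K0 * (\<integral>\<^sup>+y. G x y \<partial>lebesgue) \<partial>lebesgue)"
    by (rule nn_integral_mono) (rule step)
  also have "\<dots> = ennreal K0 * (\<integral>\<^sup>+x. \<integral>\<^sup>+y. G x y \<partial>lebesgue \<partial>lebesgue)"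
    by (rule nn_integral_cmult) (unfold G_def, rule meas_F_inner[OF fm gm])
  finally show ?thesis unfolding K0_def c0_def \<omega>_def G_def .
qed

lemma seq_choice:
  fixes P :: "nat \<Rightarrow> nat \<Rightarrow> bool"
  assumes "\<And>j N. \<exists>n\<ge>N. P j n"
  shows "\<exists>s. strict_mono s \<and> (\<forall>j. P j (s j))"
proof -
  have "\<exists>s. \<forall>n. P n (s n) \<and> s n < s (Suc n)"
  proof (rule dependent_nat_choice)
    show "\<exists>x. P 0 x" using assms by blast
    fix x n assume "P n x"
    obtain y where "y \<ge> Suc x" "P (Suc n) y" using assms by blast
    then show "\<exists>y. P (Suc n) y \<and> x < y" by auto
  qed
  then obtain s where "\<And>n. P n (s n)" "\<And>n. s n < s (Suc n)" by blast
  then show ?thesis by (auto simp: strict_mono_Suc_iff)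
qed

lemma markov_p:
  fixes g :: "'a::euclidean_space \<Rightarrow> real"
  assumes p: "0 < p" and gm: "g \<in> borel_measurable lebesgue" and E: "E \<in> sets lebesgue" and a: "0 < a"
  shows "emeasure lebesgue {x\<in>E. a \<le> \<bar>g x\<bar>}
           \<le> ennreal (1 / a powr p) * (\<integral>\<^sup>+x\<in>E. ennreal (\<bar>g x\<bar> powr p) \<partial>lebesgue)"
proof -
  have sub: "{x\<in>E. a \<le> \<bar>g x\<bar>} \<subseteq> {x\<in>E. 1 \<le> ennreal (1 / a powr p) * ennreal (\<bar>g x\<bar> powr p)}"
  proof safe
    fix x assume "x \<in> E" "a \<le> \<bar>g x\<bar>"
    then have "a powr p \<le> \<bar>g x\<bar> powr p" using a p by (intro powr_mono2) auto
    then have "1 \<le> (1 / a powr p) * \<bar>g x\<bar> powr p" using a by (simp add: field_simps)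
    then have "ennreal 1 \<le> ennreal ((1 / a powr p) * \<bar>g x\<bar> powr p)" by (rule ennreal_leI)
    moreover have "ennreal ((1 / a powr p) * \<bar>g x\<bar> powr p) = ennreal (1 / a powr p) * ennreal (\<bar>g x\<bar> powr p)"
      by (rule ennreal_mult) (use a in auto)
    ultimately show "1 \<le> ennreal (1 / a powr p) * ennreal (\<bar>g x\<bar> powr p)" by (metis ennreal_1)
  qed
  have ms: "{x\<in>E. 1 \<le> ennreal (1 / a powr p) * ennreal (\<bar>g x\<bar> powr p)} \<in> sets lebesgue"
    using E gm by measurable
  have "emeasure lebesgue {x\<in>E. a \<le> \<bar>g x\<bar>}
      \<le> emeasure lebesgue {x\<in>E. 1 \<le> ennreal (1 / a powr p) * ennreal (\<bar>g x\<bar> powr p)}"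
    by (rule emeasure_mono[OF sub ms])
  also have "\<dots> \<le> ennreal (1 / a powr p) * (\<integral>\<^sup>+x. ennreal (\<bar>g x\<bar> powr p) * indicator E x \<partial>lebesgue)"
    by (rule nn_integral_Markov_inequality) (use E gm in measurable)
  finally show ?thesis by simp
qed

lemma BC_half:
  fixes A :: "nat \<Rightarrow> 'a::euclidean_space set"
  assumes A: "\<And>j. A j \<in> sets lebesgue" and Am: "\<And>j. emeasure lebesgue (A j) \<le> ennreal ((1/2)^j)"
  shows "AE x in lebesgue. eventually (\<lambda>j. x \<notin> A j) sequentially"
proof -
  have fin: "emeasure lebesgue (A j) < \<infinity>" for j
    using Am[of j] by (simp add: le_less_trans)
  have mle: "measure lebesgue (A j) \<le> (1/2)^j" for j
    using Am[of j] by (simp add: measure_def enn2real_leI)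
  have "summable (\<lambda>j. measure lebesgue (A j))"
    by (rule summable_comparison_test[of _ "\<lambda>j. (1/2::real)^j"]) (use mle in \<open>auto intro: summable_geometric\<close>)
  from borel_cantelli_AE1[OF A fin this] show ?thesis by simp
qed

lemma bseq_tendsto0: "(\<lambda>j::nat. (1/2::real)^j * ((1/2)^j) powr p) \<longlonglongrightarrow> 0" if "0 \<le> p"
proof (rule Lim_null_comparison)
  show "\<forall>\<^sub>F j in sequentially. norm ((1/2::real)^j * ((1/2)^j) powr p) \<le> (1/2)^j"
  proof (intro always_eventually allI)
    fix j :: nat
    have "((1/2::real)^j) powr p \<le> 1 powr p" using that by (intro powr_mono2) (auto simp: power_le_one)
    then have "((1/2::real)^j) powr p \<le> 1" by simp
    then show "norm ((1/2::real)^j * ((1/2)^j) powr p) \<le> (1/2)^j"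
      by (simp add: mult_left_le)
  qed
  show "(\<lambda>j::nat. (1/2::real)^j) \<longlonglongrightarrow> 0" by (rule LIMSEQ_power_zero) simp
qed

lemma ennreal_powr_tri:
  fixes a b :: real
  assumes p: "1 \<le> p"
  shows "ennreal (\<bar>a + b\<bar> powr p)
    \<le> ennreal (2 powr (p-1)) * ennreal (\<bar>a\<bar> powr p) + ennreal (2 powr (p-1)) * ennreal (\<bar>b\<bar> powr p)"
proof -
  have "ennreal (\<bar>a + b\<bar> powr p) \<le> ennreal (2 powr (p-1) * (\<bar>a\<bar> powr p + \<bar>b\<bar> powr p))"
    by (rule ennreal_leI[OF powr_add_le[OF p]])
  also have "\<dots> = ennreal (2 powr (p-1)) * ennreal (\<bar>a\<bar> powr p + \<bar>b\<bar> powr p)"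
    by (rule ennreal_mult) auto
  also have "ennreal (\<bar>a\<bar> powr p + \<bar>b\<bar> powr p) = ennreal (\<bar>a\<bar> powr p) + ennreal (\<bar>b\<bar> powr p)"
    by (rule ennreal_plus) auto
  finally show ?thesis by (simp add: distrib_left)
qed

lemma Lp_sym: "Lp_dist_on p E f g = Lp_dist_on p E g f"
  unfolding Lp_dist_on_def by (simp add: abs_minus_commute)

lemma Lp_tri:
  fixes f g h :: "'a::euclidean_space \<Rightarrow> real"
  assumes p: "1 \<le> p" and E: "E \<in> sets lebesgue"
    and fm: "f \<in> borel_measurable lebesgue" and gm: "g \<in> borel_measurable lebesgue"
    and hm: "h \<in> borel_measurable lebesgue"
  shows "Lp_dist_on p E f h \<le> ennreal (2 powr (p-1)) * Lp_dist_on p E f g + ennreal (2 powr (p-1)) * Lp_dist_on p E g h"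
proof -
  define K where "K = ennreal (2 powr (p-1))"
  have "Lp_dist_on p E f h \<le> (\<integral>\<^sup>+x. K * (ennreal (\<bar>f x - g x\<bar> powr p) * indicator E x)
            + K * (ennreal (\<bar>g x - h x\<bar> powr p) * indicator E x) \<partial>lebesgue)"
    unfolding Lp_dist_on_def
  proof (rule nn_integral_mono)
    fix x
    have "ennreal (\<bar>(f x - g x) + (g x - h x)\<bar> powr p)
       \<le> K * ennreal (\<bar>f x - g x\<bar> powr p) + K * ennreal (\<bar>g x - h x\<bar> powr p)"
      unfolding K_def by (rule ennreal_powr_tri[OF p])
    then show "ennreal (\<bar>f x - h x\<bar> powr p) * indicator E x
       \<le> K * (ennreal (\<bar>f x - g x\<bar> powr p) * indicator E x) + K * (ennreal (\<bar>g x - h x\<bar> powr p) * indicator E x)"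
      by (auto split: split_indicator)
  qed
  also have "\<dots> = K * Lp_dist_on p E f g + K * Lp_dist_on p E g h"
  proof -
    have m1[measurable]: "(\<lambda>x. ennreal (\<bar>f x - g x\<bar> powr p) * indicator E x) \<in> borel_measurable lebesgue"
      using E fm gm by measurable
    have m2[measurable]: "(\<lambda>x. ennreal (\<bar>g x - h x\<bar> powr p) * indicator E x) \<in> borel_measurable lebesgue"
      using E gm hm by measurable
    have m1': "(\<lambda>x. K * (ennreal (\<bar>f x - g x\<bar> powr p) * indicator E x)) \<in> borel_measurable lebesgue"
      by measurable
    have m2': "(\<lambda>x. K * (ennreal (\<bar>g x - h x\<bar> powr p) * indicator E x)) \<in> borel_measurable lebesgue"
      by measurable
    show ?thesis
      unfolding Lp_dist_on_def nn_integral_add[OF m1' m2'] nn_integral_cmult[OF m1] nn_integral_cmult[OF m2] ..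
  qed
  finally show ?thesis unfolding K_def .
qed

lemma RF:
  fixes f :: "nat \<Rightarrow> 'a::euclidean_space \<Rightarrow> real" and E :: "'a set"
  assumes p: "1 \<le> p" and E: "E \<in> sets lebesgue" and fm: "\<And>j. f j \<in> borel_measurable lebesgue"
    and ffin: "\<And>j. (\<integral>\<^sup>+x\<in>E. ennreal (\<bar>f j x\<bar> powr p) \<partial>lebesgue) < \<infinity>"
    and cauchy: "\<And>e. 0 < e \<Longrightarrow> \<exists>J. \<forall>i\<ge>J. \<forall>j\<ge>J. Lp_dist_on p E (f i) (f j) < ennreal e"
  shows "\<exists>s v. strict_mono s \<and> v \<in> borel_measurable lebesgue \<and>
    (\<integral>\<^sup>+x\<in>E. ennreal (\<bar>v x\<bar> powr p) \<partial>lebesgue) < \<infinity> \<and> (\<lambda>j. Lp_dist_on p E (f (s j)) v) \<longlonglongrightarrow> 0"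
proof -
  define b where "b j = (1/2::real)^j * ((1/2)^j) powr p" for j :: nat
  have bpos: "0 < b j" for j unfolding b_def by simp
  have "\<exists>s. strict_mono s \<and> (\<forall>j. \<forall>i\<ge>s j. \<forall>i'\<ge>s j. Lp_dist_on p E (f i) (f i') < ennreal (b j))"
  proof (rule seq_choice)
    fix j N
    obtain J where J: "\<forall>i\<ge>J. \<forall>i'\<ge>J. Lp_dist_on p E (f i) (f i') < ennreal (b j)"
      using cauchy[OF bpos[of j]] by blast
    show "\<exists>n\<ge>N. \<forall>i\<ge>n. \<forall>i'\<ge>n. Lp_dist_on p E (f i) (f i') < ennreal (b j)"
      by (rule exI[of _ "max N J"]) (use J in auto)
  qed
  then obtain s where s: "strict_mono s"
    and sd: "\<And>j i i'. i \<ge> s j \<Longrightarrow> i' \<ge> s j \<Longrightarrow> Lp_dist_on p E (f i) (f i') < ennreal (b j)"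
    by blast
  define F where "F j = f (s j)" for j
  have Fm[measurable]: "F j \<in> borel_measurable lebesgue" for j unfolding F_def by (rule fm)
  have Fd: "Lp_dist_on p E (F j) (F i) < ennreal (b j)" if "j \<le> i" for i j
    unfolding F_def by (rule sd) (use s that in \<open>auto simp: strict_mono_less_eq\<close>)
  define A where "A j = {x\<in>E. (1/2::real)^j \<le> \<bar>F j x - F (Suc j) x\<bar>}" for j
  have As: "A j \<in> sets lebesgue" for j unfolding A_def using E by measurable
  have Am: "emeasure lebesgue (A j) \<le> ennreal ((1/2)^j)" for j
  proof -
    have "emeasure lebesgue (A j) \<le> ennreal (1 / ((1/2)^j) powr p) *
        (\<integral>\<^sup>+x\<in>E. ennreal (\<bar>F j x - F (Suc j) x\<bar> powr p) \<partial>lebesgue)"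
      unfolding A_def by (rule markov_p) (use p E in auto)
    also have "\<dots> \<le> ennreal (1 / ((1/2)^j) powr p) * ennreal (b j)"
      using Fd[of j "Suc j"] unfolding Lp_dist_on_def by (intro mult_left_mono) auto
    also have "\<dots> = ennreal (1 / ((1/2)^j) powr p * b j)"
      by (rule ennreal_mult[symmetric]) (auto simp: b_def)
    also have "1 / ((1/2::real)^j) powr p * b j = (1/2)^j"
      unfolding b_def by simp
    finally show ?thesis .
  qed
  have ae: "AE x in lebesgue. eventually (\<lambda>j. x \<notin> A j) sequentially" by (rule BC_half[OF As Am])
  have conv: "AE x in lebesgue. x \<in> E \<longrightarrow> convergent (\<lambda>j. F j x)"
    using ae
  proof eventually_elim
    case (elim x)
    show ?case
    proof
      assume xE: "x \<in> E"
      have ev: "eventually (\<lambda>j. norm (F (Suc j) x - F j x) \<le> (1/2)^j) sequentially"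
        using elim by eventually_elim (use xE in \<open>auto simp: A_def abs_minus_commute\<close>)
      have sm: "summable (\<lambda>j. F (Suc j) x - F j x)"
        by (rule summable_comparison_test_ev[OF ev]) (rule summable_geometric, simp)
      then have "(\<lambda>n. \<Sum>j<n. F (Suc j) x - F j x) \<longlonglongrightarrow> (\<Sum>j. F (Suc j) x - F j x)"
        by (rule summable_LIMSEQ)
      moreover have "(\<Sum>j<n. F (Suc j) x - F j x) = F n x - F 0 x" for n
        by (rule sum_lessThan_telescope)
      ultimately have "(\<lambda>n. F n x - F 0 x) \<longlonglongrightarrow> (\<Sum>j. F (Suc j) x - F j x)" by simp
      then have "(\<lambda>n. F n x - F 0 x + F 0 x) \<longlonglongrightarrow> (\<Sum>j. F (Suc j) x - F j x) + F 0 x"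
        by (intro tendsto_add tendsto_const)
      then show "convergent (\<lambda>j. F j x)" unfolding convergent_def by auto
    qed
  qed
  define v where "v x = lim (\<lambda>j. F j x)" for x
  have vm[measurable]: "v \<in> borel_measurable lebesgue" unfolding v_def by measurable
  have vlim: "AE x in lebesgue. x \<in> E \<longrightarrow> (\<lambda>j. F j x) \<longlonglongrightarrow> v x"
    using conv by eventually_elim (auto simp: v_def convergent_LIMSEQ_iff)
  have dist: "Lp_dist_on p E (F j) v \<le> ennreal (b j)" for j
  proof -
    have "Lp_dist_on p E (F j) v
        = (\<integral>\<^sup>+x. liminf (\<lambda>i. ennreal (\<bar>F j x - F i x\<bar> powr p) * indicator E x) \<partial>lebesgue)"
      unfolding Lp_dist_on_def
    proof (rule nn_integral_cong_AE)
      show "AE x in lebesgue. ennreal (\<bar>F j x - v x\<bar> powr p) * indicator E x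
          = liminf (\<lambda>i. ennreal (\<bar>F j x - F i x\<bar> powr p) * indicator E x)"
        using vlim
      proof eventually_elim
        case (elim x)
        show ?case
        proof (cases "x \<in> E")
          case False then show ?thesis by (simp add: Liminf_const)
        next
          case True
          then have "(\<lambda>i. F i x) \<longlonglongrightarrow> v x" using elim by simp
          then have "(\<lambda>i. \<bar>F j x - F i x\<bar> powr p) \<longlonglongrightarrow> \<bar>F j x - v x\<bar> powr p"
            using p by (intro tendsto_intros) auto
          then have "(\<lambda>i. ennreal (\<bar>F j x - F i x\<bar> powr p)) \<longlonglongrightarrow> ennreal (\<bar>F j x - v x\<bar> powr p)"
            by (rule tendsto_ennrealI)
          then have "liminf (\<lambda>i. ennreal (\<bar>F j x - F i x\<bar> powr p)) = ennreal (\<bar>F j x - v x\<bar> powr p)"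
            by (intro lim_imp_Liminf) auto
          then show ?thesis using True by simp
        qed
      qed
    qed
    also have "\<dots> \<le> liminf (\<lambda>i. \<integral>\<^sup>+x. ennreal (\<bar>F j x - F i x\<bar> powr p) * indicator E x \<partial>lebesgue)"
      by (rule nn_integral_liminf) (use E in measurable)
    also have "\<dots> \<le> ennreal (b j)"
    proof (rule Liminf_le)
      show "eventually (\<lambda>i. (\<integral>\<^sup>+x. ennreal (\<bar>F j x - F i x\<bar> powr p) * indicator E x \<partial>lebesgue) \<le> ennreal (b j)) sequentially"
        using eventually_ge_at_top[of j]
        by eventually_elim (use Fd in \<open>auto simp: Lp_dist_on_def less_imp_le\<close>)
    qed simp
    finally show ?thesis .
  qed
  have lim0: "(\<lambda>j. Lp_dist_on p E (F j) v) \<longlonglongrightarrow> 0"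
  proof (rule tendsto_sandwich[of "\<lambda>_. 0" _ _ "\<lambda>j. ennreal (b j)"])
    show "eventually (\<lambda>j. 0 \<le> Lp_dist_on p E (F j) v) sequentially" by simp
    show "eventually (\<lambda>j. Lp_dist_on p E (F j) v \<le> ennreal (b j)) sequentially" using dist by simp
    show "(\<lambda>j. 0) \<longlonglongrightarrow> (0::ennreal)" by simp
    have "(\<lambda>j. b j) \<longlonglongrightarrow> 0" unfolding b_def using bseq_tendsto0[of p] p by simp
    then have "(\<lambda>j. ennreal (b j)) \<longlonglongrightarrow> ennreal 0" by (rule tendsto_ennrealI)
    then show "(\<lambda>j. ennreal (b j)) \<longlonglongrightarrow> 0" by simp
  qed
  have vfin: "(\<integral>\<^sup>+x\<in>E. ennreal (\<bar>v x\<bar> powr p) \<partial>lebesgue) < \<infinity>"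
  proof -
    have "(\<integral>\<^sup>+x\<in>E. ennreal (\<bar>v x\<bar> powr p) \<partial>lebesgue) = Lp_dist_on p E v (\<lambda>_. 0)"
      unfolding Lp_dist_on_def by simp
    also have "\<dots> \<le> ennreal (2 powr (p-1)) * Lp_dist_on p E v (F 0) + ennreal (2 powr (p-1)) * Lp_dist_on p E (F 0) (\<lambda>_. 0)"
      by (rule Lp_tri[OF p E]) auto
    also have "\<dots> < \<infinity>"
    proof -
      have "Lp_dist_on p E v (F 0) < \<infinity>" using dist[of 0] Lp_sym[of p E v "F 0"] by (simp add: le_less_trans)
      moreover have "Lp_dist_on p E (F 0) (\<lambda>_. 0) < \<infinity>" using ffin[of "s 0"] by (simp add: Lp_dist_on_def F_def)
      ultimately show ?thesis by (simp add: ennreal_mult_less_top)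
    qed
    finally show ?thesis .
  qed
  show ?thesis using s vm vfin lim0 unfolding F_def by blast
qed

lemma AEsub:
  fixes f :: "nat \<Rightarrow> 'a::euclidean_space \<Rightarrow> real" and w :: "'a \<Rightarrow> real"
  assumes p: "1 \<le> p" and fm: "\<And>j. f j \<in> borel_measurable lebesgue" and wm: "w \<in> borel_measurable lebesgue"
    and conv: "\<And>E. compact E \<Longrightarrow> (\<lambda>j. Lp_dist_on p E (f j) w) \<longlonglongrightarrow> 0"
  shows "\<exists>s. strict_mono s \<and> (AE x in lebesgue. (\<lambda>j. f (s j) x) \<longlonglongrightarrow> w x)"
proof -
  define b where "b j = (1/2::real)^j * ((1/2)^j) powr p" for j :: nat
  have bpos: "0 < b j" for j unfolding b_def by simp
  have "\<exists>s. strict_mono s \<and> (\<forall>j. Lp_dist_on p (cball 0 (real j)) (f (s j)) w < ennreal (b j))"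
  proof (rule seq_choice)
    fix j N
    have "eventually (\<lambda>n. Lp_dist_on p (cball 0 (real j)) (f n) w < ennreal (b j)) sequentially"
      using conv[of "cball 0 (real j)"] bpos[of j] by (intro order_tendstoD(2)) auto
    then obtain N0 where N0: "\<forall>n\<ge>N0. Lp_dist_on p (cball 0 (real j)) (f n) w < ennreal (b j)"
      by (auto simp: eventually_sequentially)
    show "\<exists>n\<ge>N. Lp_dist_on p (cball 0 (real j)) (f n) w < ennreal (b j)"
      by (rule exI[of _ "max N N0"]) (use N0 in auto)
  qed
  then obtain s where s: "strict_mono s"
    and sd: "\<And>j. Lp_dist_on p (cball 0 (real j)) (f (s j)) w < ennreal (b j)" by blast
  define A where "A j = {x\<in>cball 0 (real j). (1/2::real)^j \<le> \<bar>f (s j) x - w x\<bar>}" for j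
  have cb[measurable]: "cball (0::'a) r \<in> sets lebesgue" for r by (simp add: fmeasurableD lmeasurable_cball)
  have fsm[measurable]: "f (s j) \<in> borel_measurable lebesgue" for j by (rule fm)
  have As: "A j \<in> sets lebesgue" for j unfolding A_def using wm by measurable
  have Am: "emeasure lebesgue (A j) \<le> ennreal ((1/2)^j)" for j
  proof -
    have "emeasure lebesgue (A j) \<le> ennreal (1 / ((1/2)^j) powr p) *
        (\<integral>\<^sup>+x\<in>cball 0 (real j). ennreal (\<bar>f (s j) x - w x\<bar> powr p) \<partial>lebesgue)"
      unfolding A_def by (rule markov_p) (use p wm in auto)
    also have "\<dots> \<le> ennreal (1 / ((1/2)^j) powr p) * ennreal (b j)"
      using sd[of j] unfolding Lp_dist_on_def by (intro mult_left_mono) auto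
    also have "\<dots> = ennreal (1 / ((1/2)^j) powr p * b j)"
      by (rule ennreal_mult[symmetric]) (auto simp: b_def)
    also have "1 / ((1/2::real)^j) powr p * b j = (1/2)^j"
      unfolding b_def by simp
    finally show ?thesis .
  qed
  have ae: "AE x in lebesgue. eventually (\<lambda>j. x \<notin> A j) sequentially" by (rule BC_half[OF As Am])
  have "AE x in lebesgue. (\<lambda>j. f (s j) x) \<longlonglongrightarrow> w x"
    using ae
  proof eventually_elim
    case (elim x)
    obtain n :: nat where n: "norm x \<le> real n" using real_arch_simple by blast
    have ev1: "eventually (\<lambda>j. x \<in> cball 0 (real j)) sequentially"
      using eventually_ge_at_top[of n] by eventually_elim (use n in auto)
    have "eventually (\<lambda>j. norm (f (s j) x - w x) \<le> (1/2)^j) sequentially"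
      using elim ev1 by eventually_elim (auto simp: A_def)
    then have "(\<lambda>j. f (s j) x - w x) \<longlonglongrightarrow> 0"
      by (rule Lim_null_comparison) (rule LIMSEQ_power_zero, simp)
    then show ?case by (simp add: LIM_zero_iff)
  qed
  with s show ?thesis by blast
qed

lemma fin_conv_subseq:
  fixes a :: "'k \<Rightarrow> nat \<Rightarrow> real"
  assumes "finite K" "\<And>k. k \<in> K \<Longrightarrow> bounded (range (a k))"
  shows "\<exists>r. strict_mono r \<and> (\<forall>k\<in>K. convergent (\<lambda>j. a k (r j)))"
  using assms
proof (induction K rule: finite_induct)
  case empty
  show ?case by (rule exI[of _ "\<lambda>j. j"]) (simp add: strict_mono_def)
next
  case (insert k0 K)
  then obtain r where r: "strict_mono r" and rc: "\<forall>k\<in>K. convergent (\<lambda>j. a k (r j))" by blast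
  have "bounded (range (\<lambda>j. a k0 (r j)))"
    using insert.prems[of k0] by (rule bounded_subset) auto
  then obtain l r2 where r2: "strict_mono r2" and l: "((\<lambda>j. a k0 (r j)) \<circ> r2) \<longlonglongrightarrow> l"
    using bounded_imp_convergent_subsequence by blast
  show ?case
  proof (intro exI conjI ballI)
    show "strict_mono (r \<circ> r2)" using r r2 by (rule strict_mono_o)
    fix k assume "k \<in> insert k0 K"
    then show "convergent (\<lambda>j. a k ((r \<circ> r2) j))"
    proof
      assume "k = k0" then show ?thesis using l by (auto simp: convergent_def o_def)
    next
      assume "k \<in> K"
      then have "convergent ((\<lambda>j. a k (r j)) \<circ> r2)" using rc r2 by (intro convergent_subseq_convergent) auto
      then show ?thesis by (simp add: o_def)
    qed
  qed
qed

lemma liminf_mult_ennreal: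
  fixes A B :: "nat \<Rightarrow> ennreal"
  assumes A: "A \<longlonglongrightarrow> a" and fin: "a \<noteq> top"
  shows "a * liminf B \<le> liminf (\<lambda>j. A j * B j)"
proof (cases "a = 0")
  case True then show ?thesis by simp
next
  case False
  have e: "enn2ereal (liminf X) = liminf (\<lambda>j. enn2ereal (X j))" for X :: "nat \<Rightarrow> ennreal"
    by (rule Liminf_compose_continuous_mono[symmetric])
       (auto simp: continuous_on_enn2ereal mono_def less_eq_ennreal.rep_eq)
  have 1: "(\<lambda>j. enn2ereal (A j)) \<longlonglongrightarrow> enn2ereal a" using A by simp
  have 2: "0 < enn2ereal a" using False
    by (metis enn2ereal_nonneg order_le_less zero_ennreal.rep_eq e2ennreal_enn2ereal)
  have 3: "enn2ereal a \<noteq> \<infinity>" using fin by simp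
  have "liminf (\<lambda>j. enn2ereal (A j) * enn2ereal (B j)) = enn2ereal a * liminf (\<lambda>j. enn2ereal (B j))"
    by (rule ereal_liminf_lim_mult[OF 1 2 3])
  then have "enn2ereal (liminf (\<lambda>j. A j * B j)) = enn2ereal (a * liminf B)"
    by (simp add: e times_ennreal.rep_eq)
  then show ?thesis by (simp add: enn2ereal_inject)
qed

lemma Liminf_at_right_seq:
  fixes g :: "real \<Rightarrow> ennreal" and \<tau> :: "nat \<Rightarrow> real"
  assumes t: "\<tau> \<longlonglongrightarrow> 0" and tpos: "\<And>j. 0 < \<tau> j"
  shows "Liminf (at_right 0) g \<le> liminf (\<lambda>j. g (\<tau> j))"
proof -
  have ev: "eventually (\<lambda>j. \<tau> j \<in> {0<..} \<and> \<tau> j \<noteq> 0) sequentially"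
    by (rule always_eventually) (use tpos in \<open>auto simp: less_imp_neq[symmetric]\<close>)
  have fl: "filterlim \<tau> (at_right 0) sequentially"
    unfolding filterlim_at using t ev by auto
  show ?thesis
  proof (subst le_Liminf_iff, intro allI impI)
    fix y assume "y < Liminf (at_right 0) g"
    then have "eventually (\<lambda>s. y < g s) (at_right 0)" by (rule less_LiminfD)
    then show "eventually (\<lambda>j. y < g (\<tau> j)) sequentially"
      using fl by (auto simp: filterlim_iff)
  qed
qed

definition Stp :: "real \<Rightarrow> 'a::euclidean_space set \<Rightarrow> (('a \<Rightarrow> int) \<Rightarrow> real) \<Rightarrow> 'a \<Rightarrow> real" where
  "Stp h E a x = (\<Sum>k\<in>ckey h ` E. indicator (cub h k) x * a k)"

lemma Pr_Stp: "Pr h E f = Stp h E (avg h f)"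
  by (simp add: fun_eq_iff Pr_def Stp_def)

lemma Stp_on:
  assumes fin: "finite (ckey h ` E)" and x: "x \<in> E"
  shows "Stp h E a x = a (ckey h x)"
proof -
  have "Stp h E a x = (\<Sum>k\<in>ckey h ` E. if ckey h x = k then a k else 0)"
    unfolding Stp_def by (intro sum.cong) (auto simp: indicator_def in_cub_iff)
  also have "\<dots> = a (ckey h x)"
    using fin x by (simp add: sum.delta)
  finally show ?thesis .
qed

lemma Stp_meas:
  assumes h: "0 < h"
  shows "Stp h E a \<in> borel_measurable lebesgue"
  unfolding Stp_def
  by (intro borel_measurable_sum borel_measurable_times borel_measurable_indicator cub_sets[OF h]
      borel_measurable_const)

lemma StepDist:
  fixes E :: "'a::euclidean_space set"
  assumes h: "0 < h" and fin: "finite (ckey h ` E)"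
  shows "Lp_dist_on p E (Stp h E a) (Stp h E b)
    \<le> ennreal (\<Sum>k\<in>ckey h ` E. \<bar>a k - b k\<bar> powr p * measure lebesgue (cub h k))"
proof -
  define K where "K = ckey h ` E"
  have Kl: "cub h k \<in> lmeasurable" if "k \<in> K" for k
    using that cub_lmeasurable[OF h] unfolding K_def by auto
  have intk: "integrable lebesgue (\<lambda>x. indicator (cub h k) x * \<bar>a k - b k\<bar> powr p)" if "k \<in> K" for k
  proof -
    have "integrable lebesgue (indicator (cub h k) :: 'a \<Rightarrow> real)"
      using Kl[OF that] by (auto simp: fmeasurable_def)
    then show ?thesis by simp
  qed
  have int: "integrable lebesgue (\<lambda>x. \<Sum>k\<in>K. indicator (cub h k) x * \<bar>a k - b k\<bar> powr p)"
    using intk by (rule Bochner_Integration.integrable_sum)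
  have "Lp_dist_on p E (Stp h E a) (Stp h E b)
      \<le> (\<integral>\<^sup>+x. ennreal (\<Sum>k\<in>K. indicator (cub h k) x * \<bar>a k - b k\<bar> powr p) \<partial>lebesgue)"
    unfolding Lp_dist_on_def
  proof (rule nn_integral_mono)
    fix x
    show "ennreal (\<bar>Stp h E a x - Stp h E b x\<bar> powr p) * indicator E x
        \<le> ennreal (\<Sum>k\<in>K. indicator (cub h k) x * \<bar>a k - b k\<bar> powr p)"
    proof (cases "x \<in> E")
      case False then show ?thesis by simp
    next
      case True
      have "(\<Sum>k\<in>K. indicator (cub h k) x * \<bar>a k - b k\<bar> powr p)
          = (\<Sum>k\<in>K. if ckey h x = k then \<bar>a k - b k\<bar> powr p else 0)"
        by (intro sum.cong) (auto simp: indicator_def in_cub_iff)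
      also have "\<dots> = \<bar>a (ckey h x) - b (ckey h x)\<bar> powr p"
        using fin True by (simp add: sum.delta K_def)
      finally show ?thesis using True Stp_on[OF fin True] by simp
    qed
  qed
  also have "\<dots> = ennreal (\<integral>x. (\<Sum>k\<in>K. indicator (cub h k) x * \<bar>a k - b k\<bar> powr p) \<partial>lebesgue)"
    by (rule nn_integral_eq_integral[OF int]) (auto intro!: sum_nonneg)
  also have "(\<integral>x. (\<Sum>k\<in>K. indicator (cub h k) x * \<bar>a k - b k\<bar> powr p) \<partial>lebesgue)
      = (\<Sum>k\<in>K. \<bar>a k - b k\<bar> powr p * measure lebesgue (cub h k))"
  proof -
    have "(\<integral>x. (\<Sum>k\<in>K. indicator (cub h k) x * \<bar>a k - b k\<bar> powr p) \<partial>lebesgue)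
        = (\<Sum>k\<in>K. \<integral>x. indicator (cub h k) x * \<bar>a k - b k\<bar> powr p \<partial>lebesgue)"
      using intk by (rule Bochner_Integration.integral_sum)
    also have "\<dots> = (\<Sum>k\<in>K. \<bar>a k - b k\<bar> powr p * measure lebesgue (cub h k))"
      by (intro sum.cong refl) (simp add: Kl fmeasurableD)
    finally show ?thesis .
  qed
  finally show ?thesis unfolding K_def .
qed

lemma Lp_tri4:
  fixes f1 f2 f3 f4 f5 :: "'a::euclidean_space \<Rightarrow> real"
  assumes p: "1 \<le> p" and E: "E \<in> sets lebesgue"
    and m1: "f1 \<in> borel_measurable lebesgue" and m2: "f2 \<in> borel_measurable lebesgue"
    and m3: "f3 \<in> borel_measurable lebesgue" and m4: "f4 \<in> borel_measurable lebesgue"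
    and m5: "f5 \<in> borel_measurable lebesgue"
  shows "Lp_dist_on p E f1 f5 \<le> ennreal ((2 powr (p-1))^3) *
    (Lp_dist_on p E f1 f2 + Lp_dist_on p E f2 f3 + Lp_dist_on p E f3 f4 + Lp_dist_on p E f4 f5)"
proof -
  define L where "L = ennreal (2 powr (p-1))"
  have L1: "1 \<le> L" unfolding L_def using p by (simp add: ge_one_powr_ge_zero)
  define a where "a = Lp_dist_on p E f1 f2"
  define b where "b = Lp_dist_on p E f2 f3"
  define c where "c = Lp_dist_on p E f3 f4"
  define d where "d = Lp_dist_on p E f4 f5"
  have t1: "Lp_dist_on p E f1 f5 \<le> L * a + L * Lp_dist_on p E f2 f5"
    unfolding L_def a_def by (rule Lp_tri[OF p E m1 m2 m5])
  have t2: "Lp_dist_on p E f2 f5 \<le> L * b + L * Lp_dist_on p E f3 f5"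
    unfolding L_def b_def by (rule Lp_tri[OF p E m2 m3 m5])
  have t3: "Lp_dist_on p E f3 f5 \<le> L * c + L * d"
    unfolding L_def c_def d_def by (rule Lp_tri[OF p E m3 m4 m5])
  have "Lp_dist_on p E f1 f5 \<le> L * a + L * (L * b + L * (L * c + L * d))"
    using t1 t2 t3 by (meson add_left_mono mult_left_mono order_trans zero_le)
  also have "\<dots> = L * a + (L * L) * b + (L * L * L) * c + (L * L * L) * d"
    by (simp add: distrib_left mult.assoc add.assoc)
  also have "\<dots> \<le> (L * L * L) * a + (L * L * L) * b + (L * L * L) * c + (L * L * L) * d"
  proof -
    have LL: "L \<le> L * L" using L1 by (metis mult.right_neutral mult_left_mono zero_le)
    have LLL: "L * L \<le> L * L * L" using L1 by (metis mult.right_neutral mult_left_mono zero_le)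
    have L3: "L \<le> L * L * L" by (rule order_trans[OF LL LLL])
    have "L * a \<le> (L * L * L) * a" by (rule mult_right_mono[OF L3]) simp
    moreover have "(L * L) * b \<le> (L * L * L) * b" by (rule mult_right_mono[OF LLL]) simp
    ultimately show ?thesis by (intro add_mono) auto
  qed
  also have "\<dots> = (L * L * L) * (a + b + c + d)" by (simp add: distrib_left)
  also have "L * L * L = ennreal ((2 powr (p-1))^3)"
    unfolding L_def by (simp add: ennreal_power[symmetric] power3_eq_cube ennreal_mult[symmetric])
  finally show ?thesis unfolding a_def b_def c_def d_def .
qed

lemma part1:
  fixes f :: "nat \<Rightarrow> 'a::euclidean_space \<Rightarrow> real" and E :: "'a set"
  assumes p: "1 \<le> p" and E: "compact E" and fm: "\<And>j. f j \<in> borel_measurable lebesgue"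
    and M0: "0 \<le> M" and fb: "\<And>j. (\<integral>\<^sup>+x. ennreal (\<bar>f j x\<bar> powr p) \<partial>lebesgue) \<le> ennreal M"
    and key: "\<And>e. 0 < e \<Longrightarrow> \<exists>n K. \<forall>j\<ge>K. Lp_dist_on p E (f j) (Pr ((1/2)^n) E (f j)) \<le> ennreal e"
  shows "\<exists>s v. strict_mono s \<and> v \<in> borel_measurable lebesgue \<and>
    (\<integral>\<^sup>+x\<in>E. ennreal (\<bar>v x\<bar> powr p) \<partial>lebesgue) < \<infinity> \<and> (\<lambda>j. Lp_dist_on p E (f (s j)) v) \<longlonglongrightarrow> 0"
proof -
  define hn where "hn n = (1/2::real)^n" for n :: nat
  have hpos: "0 < hn n" for n unfolding hn_def by simp
  define KK where "KK n = ckey (hn n) ` E" for n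
  have KKfin: "finite (KK n)" for n unfolding KK_def by (rule ckey_finite[OF hpos E])
  have Es: "E \<in> sets lebesgue" using lmeasurable_compact[OF E] by (rule fmeasurableD)
  define c where "c n k j = avg (hn n) (f j) k" for n k j
  have cbd: "bounded (range (c n k))" if kK: "k \<in> KK n" for n k
  proof -
    obtain x where x: "x \<in> E" "k = ckey (hn n) x" using kK unfolding KK_def by auto
    define \<mu> where "\<mu> = measure lebesgue (cub (hn n) k)"
    have "\<bar>c n k j\<bar> \<le> (\<mu> + M) / \<mu>" for j
      unfolding c_def \<mu>_def x(2) by (rule avg_bound[OF p fm hpos fb M0])
    then show ?thesis unfolding bounded_iff by auto
  qed
  interpret S: subseqs "\<lambda>n s. \<forall>k\<in>KK n. convergent (\<lambda>j. c n k (s j))"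
  proof
    fix n and s :: "nat \<Rightarrow> nat" assume "strict_mono s"
    have "bounded (range (\<lambda>j. c n k (s j)))" if "k \<in> KK n" for k
      using cbd[OF that] by (rule bounded_subset) auto
    then obtain r where "strict_mono r" "\<forall>k\<in>KK n. convergent (\<lambda>j. c n k (s (r j)))"
      using fin_conv_subseq[of "KK n" "\<lambda>k j. c n k (s j)"] KKfin by blast
    then show "\<exists>r'. strict_mono r' \<and> (\<forall>k\<in>KK n. convergent (\<lambda>j. c n k ((s \<circ> r') j)))"
      by (auto simp: o_def)
  qed
  define s1 where "s1 = S.diagseq"
  have s1: "strict_mono s1" unfolding s1_def by (rule S.subseq_diagseq)
  have s1c: "convergent (\<lambda>j. c n k (s1 j))" if "k \<in> KK n" for n k
  proof -
    have "\<forall>k\<in>KK n. convergent (\<lambda>j. c n k ((S.diagseq \<circ> (+) (Suc n)) j))"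
    proof (rule S.diagseq_holds)
      fix r s :: "nat \<Rightarrow> nat" and n
      assume r: "strict_mono r" and P: "\<forall>k\<in>KK n. convergent (\<lambda>j. c n k (s j))"
      show "\<forall>k\<in>KK n. convergent (\<lambda>j. c n k ((s \<circ> r) j))"
      proof
        fix k assume "k \<in> KK n"
        then have "convergent ((\<lambda>j. c n k (s j)) \<circ> r)" using P r by (intro convergent_subseq_convergent) auto
        then show "convergent (\<lambda>j. c n k ((s \<circ> r) j))" by (simp add: o_def)
      qed
    qed
    then have "convergent (\<lambda>j. c n k (S.diagseq (j + Suc n)))" using that by (simp add: o_def add.commute)
    then show ?thesis unfolding s1_def
      using convergent_ignore_initial_segment[of "\<lambda>j. c n k (S.diagseq j)" "Suc n"] by simp
  qed
  define F where "F j = f (s1 j)" for j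
  have Fm: "F j \<in> borel_measurable lebesgue" for j unfolding F_def by (rule fm)
  define l where "l n k = lim (\<lambda>j. c n k (s1 j))" for n k
  have cl: "(\<lambda>j. c n k (s1 j)) \<longlonglongrightarrow> l n k" if "k \<in> KK n" for n k
    using s1c[OF that] unfolding l_def by (simp add: convergent_LIMSEQ_iff)
  define Pinf where "Pinf n = Stp (hn n) E (l n)" for n
  have PrF: "Pr (hn n) E (F i) = Stp (hn n) E (\<lambda>k. c n k (s1 i))" for n i
    by (simp add: Pr_Stp c_def F_def)
  have cauchy: "\<exists>J. \<forall>i\<ge>J. \<forall>j\<ge>J. Lp_dist_on p E (F i) (F j) < ennreal e" if e: "0 < e" for e
  proof -
    define C3 where "C3 = (2 powr (p-1))^3"
    have C3: "0 < C3" unfolding C3_def by simp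
    define e1 where "e1 = e / (5 * C3)"
    have e1: "0 < e1" unfolding e1_def using e C3 by simp
    obtain n K0 where nK: "\<And>j. j \<ge> K0 \<Longrightarrow> Lp_dist_on p E (f j) (Pr (hn n) E (f j)) \<le> ennreal e1"
      using key[OF e1] unfolding hn_def by blast
    define S where "S i = (\<Sum>k\<in>KK n. \<bar>c n k (s1 i) - l n k\<bar> powr p * measure lebesgue (cub (hn n) k))" for i
    have S0: "S \<longlonglongrightarrow> 0"
    proof -
      have "S \<longlonglongrightarrow> (\<Sum>k\<in>KK n. \<bar>l n k - l n k\<bar> powr p * measure lebesgue (cub (hn n) k))"
        unfolding S_def
      proof (intro tendsto_sum tendsto_mult tendsto_const)
        fix k assume k: "k \<in> KK n"
        have "(\<lambda>i. \<bar>c n k (s1 i) - l n k\<bar>) \<longlonglongrightarrow> \<bar>l n k - l n k\<bar>"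
          by (intro tendsto_intros cl[OF k])
        then show "(\<lambda>i. \<bar>c n k (s1 i) - l n k\<bar> powr p) \<longlonglongrightarrow> \<bar>l n k - l n k\<bar> powr p"
          using p by (intro tendsto_powr') auto
      qed
      then show ?thesis using p by simp
    qed
    obtain J1 where J1: "\<And>i. i \<ge> J1 \<Longrightarrow> S i < e1"
      using order_tendstoD(2)[OF S0 e1] by (auto simp: eventually_sequentially)
    have dstep: "Lp_dist_on p E (Pr (hn n) E (F i)) (Pinf n) \<le> ennreal (S i)" for i
      unfolding PrF Pinf_def S_def KK_def by (rule StepDist[OF hpos KKfin[unfolded KK_def]])
    have Pm: "Pr (hn n) E (F i) \<in> borel_measurable lebesgue" for i by (rule Pr_meas[OF hpos])
    have Pim: "Pinf n \<in> borel_measurable lebesgue" unfolding Pinf_def by (rule Stp_meas[OF hpos])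
    define J where "J = max K0 J1"
    show ?thesis
    proof (intro exI allI impI)
      fix i j assume i: "J \<le> i" and j: "J \<le> j"
      have si: "K0 \<le> s1 i" using seq_suble[OF s1, of i] i unfolding J_def by linarith
      have sj: "K0 \<le> s1 j" using seq_suble[OF s1, of j] j unfolding J_def by linarith
      have d1: "Lp_dist_on p E (F i) (Pr (hn n) E (F i)) \<le> ennreal e1"
        unfolding F_def by (rule nK[OF si])
      have d2: "Lp_dist_on p E (Pr (hn n) E (F i)) (Pinf n) \<le> ennreal e1"
        using dstep[of i] J1[of i] i unfolding J_def by (meson ennreal_leI less_imp_le max.boundedE order_trans)
      have d3: "Lp_dist_on p E (Pinf n) (Pr (hn n) E (F j)) \<le> ennreal e1"
        using dstep[of j] J1[of j] j Lp_sym[of p E "Pinf n"] unfolding J_def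
        by (metis ennreal_leI less_imp_le max.boundedE order_trans)
      have d4: "Lp_dist_on p E (Pr (hn n) E (F j)) (F j) \<le> ennreal e1"
        using nK[OF sj] Lp_sym[of p E "F j"] unfolding F_def by simp
      have "Lp_dist_on p E (F i) (F j) \<le> ennreal C3 *
          (Lp_dist_on p E (F i) (Pr (hn n) E (F i)) + Lp_dist_on p E (Pr (hn n) E (F i)) (Pinf n)
           + Lp_dist_on p E (Pinf n) (Pr (hn n) E (F j)) + Lp_dist_on p E (Pr (hn n) E (F j)) (F j))"
        unfolding C3_def by (rule Lp_tri4[OF p Es Fm Pm Pim Pm Fm])
      also have "\<dots> \<le> ennreal C3 * (ennreal e1 + ennreal e1 + ennreal e1 + ennreal e1)"
        by (intro mult_left_mono add_mono d1 d2 d3 d4) simp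
      also have "\<dots> = ennreal (C3 * (4 * e1))"
        using C3 e1 by (simp add: ennreal_mult[symmetric] ennreal_plus[symmetric] del: ennreal_plus)
      also have "\<dots> < ennreal e"
      proof -
        have "C3 * (4 * e1) = 4 / 5 * e" unfolding e1_def using C3 by simp
        also have "\<dots> < e" using e by simp
        finally show ?thesis using e by (intro ennreal_lessI)
      qed
      finally show "Lp_dist_on p E (F i) (F j) < ennreal e" .
    qed
  qed
  have ffin: "(\<integral>\<^sup>+x\<in>E. ennreal (\<bar>F j x\<bar> powr p) \<partial>lebesgue) < \<infinity>" for j
  proof -
    have "(\<integral>\<^sup>+x\<in>E. ennreal (\<bar>F j x\<bar> powr p) \<partial>lebesgue) \<le> (\<integral>\<^sup>+x. ennreal (\<bar>F j x\<bar> powr p) \<partial>lebesgue)"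
      by (intro nn_integral_mono) (auto split: split_indicator)
    also have "\<dots> \<le> ennreal M" unfolding F_def by (rule fb)
    finally show ?thesis by (simp add: le_less_trans)
  qed
  obtain s2 v where s2: "strict_mono s2" and vm: "v \<in> borel_measurable lebesgue"
    and vfin: "(\<integral>\<^sup>+x\<in>E. ennreal (\<bar>v x\<bar> powr p) \<partial>lebesgue) < \<infinity>"
    and lim: "(\<lambda>j. Lp_dist_on p E (F (s2 j)) v) \<longlonglongrightarrow> 0"
    using RF[OF p Es Fm ffin cauchy] by blast
  show ?thesis
  proof (intro exI conjI)
    show "strict_mono (s1 \<circ> s2)" using s1 s2 by (rule strict_mono_o)
    show "(\<lambda>j. Lp_dist_on p E (f ((s1 \<circ> s2) j)) v) \<longlonglongrightarrow> 0" using lim by (simp add: F_def o_def)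
  qed fact+
qed

lemma meas_F_y:
  fixes f g :: "'a::euclidean_space \<Rightarrow> real"
  assumes fm: "f \<in> borel_measurable lebesgue" and gm: "g \<in> borel_measurable lebesgue"
  shows "(\<lambda>y. ennreal (\<bar>f x - f y\<bar> powr p / norm (x - y) powr p * g (x - y))) \<in> borel_measurable lebesgue"
proof -
  have gx[measurable]: "(\<lambda>y. g (x - y)) \<in> borel_measurable lebesgue"
    by (rule measurable_compose[OF reflect_meas gm])
  have "(\<lambda>y. norm (x - y) powr p) \<in> borel_measurable lborel" by measurable
  then have nx[measurable]: "(\<lambda>y. norm (x - y) powr p) \<in> borel_measurable lebesgue"
    by (rule measurable_completion)
  have fd[measurable]: "(\<lambda>y. \<bar>f x - f y\<bar> powr p) \<in> borel_measurable lebesgue" using fm by measurable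
  have "(\<lambda>y. \<bar>f x - f y\<bar> powr p / norm (x - y) powr p * g (x - y)) \<in> borel_measurable lebesgue"
    by (intro borel_measurable_times borel_measurable_divide fd nx gx)
  then show ?thesis by measurable
qed

lemma kernel_bound:
  fixes f :: "nat \<Rightarrow> 'a::euclidean_space \<Rightarrow> real" and w :: "'a \<Rightarrow> real"
    and \<rho> :: "real \<Rightarrow> 'a \<Rightarrow> real" and \<tau> :: "nat \<Rightarrow> real"
  assumes p: "1 \<le> p" and fm: "\<And>j. f j \<in> borel_measurable lebesgue"
    and ae: "AE x in lebesgue. (\<lambda>j. f j x) \<longlonglongrightarrow> w x"
    and tl: "\<tau> \<longlonglongrightarrow> 0" and tpos: "\<And>j. 0 < \<tau> j"
    and gm: "\<And>j. \<rho> (\<tau> j) \<in> borel_measurable lebesgue" and gnn: "\<And>j z. 0 \<le> \<rho> (\<tau> j) z"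
    and Fb: "\<And>j. F_tp \<rho> (\<tau> j) p (f j) \<le> ennreal C"
  shows "(\<integral>\<^sup>+x. \<integral>\<^sup>+y. ennreal (\<bar>w x - w y\<bar> powr p) *
      Liminf (at_right 0) (\<lambda>s. ennreal (\<rho> s (x - y) / norm (x - y) powr p)) \<partial>lebesgue \<partial>lebesgue) \<le> ennreal C"
proof -
  define G where "G j x y = ennreal (\<bar>f j x - f j y\<bar> powr p / norm (x - y) powr p * \<rho> (\<tau> j) (x - y))" for j x y
  define \<kappa> where "\<kappa> z = Liminf (at_right 0) (\<lambda>s. ennreal (\<rho> s z / norm z powr p))" for z
  have pt: "ennreal (\<bar>w x - w y\<bar> powr p) * \<kappa> (x - y) \<le> liminf (\<lambda>j. G j x y)"
    if cx: "(\<lambda>j. f j x) \<longlonglongrightarrow> w x" and cy: "(\<lambda>j. f j y) \<longlonglongrightarrow> w y" for x y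
  proof -
    define A where "A j = ennreal (\<bar>f j x - f j y\<bar> powr p)" for j
    define B where "B j = ennreal (\<rho> (\<tau> j) (x - y) / norm (x - y) powr p)" for j
    have "(\<lambda>j. \<bar>f j x - f j y\<bar>) \<longlonglongrightarrow> \<bar>w x - w y\<bar>" by (intro tendsto_intros cx cy)
    then have "(\<lambda>j. \<bar>f j x - f j y\<bar> powr p) \<longlonglongrightarrow> \<bar>w x - w y\<bar> powr p"
      using p by (intro tendsto_powr') auto
    then have Al: "A \<longlonglongrightarrow> ennreal (\<bar>w x - w y\<bar> powr p)" unfolding A_def by (rule tendsto_ennrealI)
    have kB: "\<kappa> (x - y) \<le> liminf B" unfolding \<kappa>_def B_def by (rule Liminf_at_right_seq[OF tl tpos])
    have GAB: "G j x y = A j * B j" for j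
    proof -
      have "\<bar>f j x - f j y\<bar> powr p / norm (x - y) powr p * \<rho> (\<tau> j) (x - y)
          = \<bar>f j x - f j y\<bar> powr p * (\<rho> (\<tau> j) (x - y) / norm (x - y) powr p)" (is "_ = ?r") by simp
      then show ?thesis unfolding G_def A_def B_def
        by (simp only:) (rule ennreal_mult, simp, use gnn[of j "x - y"] in simp)
    qed
    have "ennreal (\<bar>w x - w y\<bar> powr p) * \<kappa> (x - y) \<le> ennreal (\<bar>w x - w y\<bar> powr p) * liminf B"
      by (rule mult_left_mono[OF kB]) simp
    also have "\<dots> \<le> liminf (\<lambda>j. A j * B j)" by (rule liminf_mult_ennreal[OF Al]) simp
    finally show ?thesis using GAB by simp
  qed
  have Gm: "(\<lambda>y. G j x y) \<in> borel_measurable lebesgue" for j x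
    unfolding G_def by (rule meas_F_y[OF fm gm])
  have Gm2: "(\<lambda>x. \<integral>\<^sup>+y. G j x y \<partial>lebesgue) \<in> borel_measurable lebesgue" for j
    unfolding G_def by (rule meas_F_inner[OF fm gm])
  have "(\<integral>\<^sup>+x. \<integral>\<^sup>+y. ennreal (\<bar>w x - w y\<bar> powr p) * \<kappa> (x - y) \<partial>lebesgue \<partial>lebesgue)
      \<le> (\<integral>\<^sup>+x. \<integral>\<^sup>+y. liminf (\<lambda>j. G j x y) \<partial>lebesgue \<partial>lebesgue)"
  proof (rule nn_integral_mono_AE)
    show "AE x in lebesgue. (\<integral>\<^sup>+y. ennreal (\<bar>w x - w y\<bar> powr p) * \<kappa> (x - y) \<partial>lebesgue)
        \<le> (\<integral>\<^sup>+y. liminf (\<lambda>j. G j x y) \<partial>lebesgue)"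
      using ae
    proof eventually_elim
      case (elim x)
      show ?case
      proof (rule nn_integral_mono_AE)
        show "AE y in lebesgue. ennreal (\<bar>w x - w y\<bar> powr p) * \<kappa> (x - y) \<le> liminf (\<lambda>j. G j x y)"
          using ae by eventually_elim (rule pt[OF elim])
      qed
    qed
  qed
  also have "\<dots> \<le> (\<integral>\<^sup>+x. liminf (\<lambda>j. \<integral>\<^sup>+y. G j x y \<partial>lebesgue) \<partial>lebesgue)"
    by (rule nn_integral_mono) (rule nn_integral_liminf[OF Gm])
  also have "\<dots> \<le> liminf (\<lambda>j. \<integral>\<^sup>+x. \<integral>\<^sup>+y. G j x y \<partial>lebesgue \<partial>lebesgue)"
    by (rule nn_integral_liminf[OF Gm2])
  also have "\<dots> \<le> ennreal C"
  proof (rule Liminf_le)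
    show "\<forall>\<^sub>F j in sequentially. (\<integral>\<^sup>+x. \<integral>\<^sup>+y. G j x y \<partial>lebesgue \<partial>lebesgue) \<le> ennreal C"
      using Fb by (auto simp: F_tp_def G_def)
  qed simp
  finally show ?thesis unfolding \<kappa>_def .
qed

lemma exists_dyadic:
  fixes a :: real
  assumes a: "0 < a" "a \<le> 1"
  shows "\<exists>n. (1/2)^n \<le> a \<and> a < 2 * (1/2)^n"
proof -
  obtain n0 where "(1/2::real)^n0 < a" using real_arch_pow_inv[OF a(1), of "1/2"] by auto
  then have ex: "\<exists>n. (1/2::real)^n \<le> a" by (auto intro: less_imp_le)
  define n where "n = (LEAST n. (1/2::real)^n \<le> a)"
  have n: "(1/2::real)^n \<le> a" unfolding n_def by (rule LeastI_ex[OF ex])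
  show ?thesis
  proof (cases n)
    case 0 then show ?thesis using n a by (intro exI[of _ 0]) simp
  next
    case (Suc m)
    then have "\<not> (1/2::real)^m \<le> a" using not_less_Least[of m "\<lambda>n. (1/2::real)^n \<le> a"] unfolding n_def by auto
    then have "a < (1/2)^m" by simp
    then have "a < 2 * (1/2::real)^n" using Suc by simp
    then show ?thesis using n by blast
  qed
qed

theorem theorem1p5:
  fixes p :: real
    and \<rho> :: "real \<Rightarrow> 'a::euclidean_space \<Rightarrow> real"
    and t :: "nat \<Rightarrow> real"
    and u :: "nat \<Rightarrow> 'a \<Rightarrow> real"
  assumes p: "1 \<le> p"
    and rho_nonneg: "\<And>s z. s \<in> {0<..<1} \<Longrightarrow> 0 \<le> \<rho> s z"
    and rho_loc: "\<And>s. s \<in> {0<..<1} \<Longrightarrow> in_Lp_loc 1 (\<rho> s)"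
    and rho_lower: "\<And>\<epsilon>. \<epsilon> > 0 \<Longrightarrow> \<exists>\<delta>\<in>{0<..1}. \<forall>s\<in>{0<..<\<delta>}.
            AE z in lebesgue. z \<in> ball 0 \<delta> \<longrightarrow>
              \<rho> s z / norm z powr p \<ge> 1 / (\<epsilon> * \<delta> ^ DIM('a))"
    and t_in: "\<And>k. t k \<in> {0<..<1}"
    and t_lim: "t \<longlonglongrightarrow> 0"
    and u_Lp: "\<And>k. in_Lp p (u k)"
    and bdd: "\<exists>C::real. \<forall>k. ennreal (Lp_norm p (u k)) + F_tp \<rho> (t k) p (u k) \<le> ennreal C"
  shows "loc_precompact_seq p u \<and>
    (\<forall>(r::nat\<Rightarrow>nat) w. strict_mono r \<and> in_Lp_loc p w \<and>
        (\<forall>E. compact E \<longrightarrow> (\<lambda>j. Lp_dist_on p E (u (r j)) w) \<longlonglongrightarrow> 0) \<longrightarrow>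
      in_W_kernel (\<lambda>z. Liminf (at_right 0) (\<lambda>s. ennreal (\<rho> s z / norm z powr p))) p w)"
proof -
  obtain C where C: "\<And>k. ennreal (Lp_norm p (u k)) + F_tp \<rho> (t k) p (u k) \<le> ennreal C"
    using bdd by blast
  have Fb: "F_tp \<rho> (t k) p (u k) \<le> ennreal C" for k
  proof -
    have "F_tp \<rho> (t k) p (u k) \<le> ennreal (Lp_norm p (u k)) + F_tp \<rho> (t k) p (u k)"
      by (rule add_increasing) simp_all
    then show ?thesis using C[of k] by (rule order_trans)
  qed
  have um: "u k \<in> borel_measurable lebesgue" for k using u_Lp[of k] unfolding in_Lp_def by blast
  have ufin: "(\<integral>\<^sup>+x. ennreal (\<bar>u k x\<bar> powr p) \<partial>lebesgue) < \<infinity>" for k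
    using u_Lp[of k] unfolding in_Lp_def by blast
  define M where "M = (max C 0) powr p"
  have M0: "0 \<le> M" unfolding M_def by simp
  have ub: "(\<integral>\<^sup>+x. ennreal (\<bar>u k x\<bar> powr p) \<partial>lebesgue) \<le> ennreal M" for k
  proof -
    have int: "integrable lebesgue (\<lambda>y. \<bar>u k y\<bar> powr p)" by (rule integrable_powr_fin[OF um ufin])
    define I where "I = (\<integral>x. \<bar>u k x\<bar> powr p \<partial>lebesgue)"
    have I0: "0 \<le> I" unfolding I_def by (rule integral_nonneg_AE) simp
    have nnI: "(\<integral>\<^sup>+x. ennreal (\<bar>u k x\<bar> powr p) \<partial>lebesgue) = ennreal I"
      unfolding I_def by (rule nn_integral_eq_integral[OF int]) simp
    have LpI: "Lp_norm p (u k) = I powr (1/p)" unfolding Lp_norm_def I_def ..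
    have "ennreal (Lp_norm p (u k)) \<le> ennreal (Lp_norm p (u k)) + F_tp \<rho> (t k) p (u k)"
      by (rule add_increasing2) simp_all
    then have "ennreal (I powr (1/p)) \<le> ennreal C" using C[of k] LpI by (metis order_trans)
    also have "ennreal C = ennreal (max C 0)" by (simp add: max_def ennreal_neg)
    finally have "I powr (1/p) \<le> max C 0" by (subst (asm) ennreal_le_iff) auto
    then have "(I powr (1/p)) powr p \<le> (max C 0) powr p" using p by (intro powr_mono2) auto
    moreover have "(I powr (1/p)) powr p = I" using I0 p by (simp add: powr_powr)
    ultimately have "I \<le> M" unfolding M_def by simp
    then show ?thesis unfolding nnI by (rule ennreal_leI)
  qed
  have rho_m: "\<rho> s \<in> borel_measurable lebesgue" if "s \<in> {0<..<1}" for s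
    using rho_loc[OF that] unfolding in_Lp_loc_def by blast
  have tpos: "0 < t k" for k using t_in[of k] by simp
  have P1: "loc_precompact_seq p u"
    unfolding loc_precompact_seq_def
  proof (intro allI impI)
    fix E :: "'a set" and r :: "nat \<Rightarrow> nat"
    assume Er: "compact E \<and> strict_mono r"
    then have E: "compact E" and r: "strict_mono r" by auto
    have trl: "(\<lambda>j. t (r j)) \<longlonglongrightarrow> 0" using LIMSEQ_subseq_LIMSEQ[OF t_lim r] by (simp add: o_def)
    have key: "\<exists>n K. \<forall>j\<ge>K. Lp_dist_on p E (u (r j)) (Pr ((1/2)^n) E (u (r j))) \<le> ennreal e"
      if e: "0 < e" for e
    proof -
      define \<omega> where "\<omega> = unit_ball_vol (real DIM('a))"
      have om: "0 < \<omega>" by (simp add: \<omega>_def)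
      define Q where "Q = (4 * real DIM('a)) ^ DIM('a)"
      have Q: "0 < Q" unfolding Q_def by simp
      define m where "m = max C 0 + 1"
      have m: "0 < m" unfolding m_def by (simp add: add_nonneg_pos)
      define \<eta> where "\<eta> = e * \<omega> / (Q * m)"
      have eta: "0 < \<eta>" unfolding \<eta>_def using e om Q m by simp
      obtain \<delta> where \<delta>: "\<delta> \<in> {0<..1}" and low: "\<forall>s\<in>{0<..<\<delta>}. AE z in lebesgue. z \<in> ball 0 \<delta> \<longrightarrow>
              \<rho> s z / norm z powr p \<ge> 1 / (\<eta> * \<delta> ^ DIM('a))"
        using rho_lower[OF eta] by blast
      have N1: "1 \<le> real DIM('a)" by simp
      have d1: "\<delta> \<le> 1" using \<delta> by simp
      have dleN: "\<delta> \<le> real DIM('a)" by (rule order_trans[OF d1 N1])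
      have dN: "0 < \<delta> / real DIM('a)" "\<delta> / real DIM('a) \<le> 1"
        using \<delta> dleN by (auto simp: divide_le_eq)
      obtain n where n1: "(1/2)^n \<le> \<delta> / real DIM('a)" and n2: "\<delta> / real DIM('a) < 2 * (1/2)^n"
        using exists_dyadic[OF dN] by blast
      define h where "h = (1/2::real)^n"
      have h: "0 < h" unfolding h_def by simp
      have hd: "real DIM('a) * h \<le> \<delta>" using n1 N1 unfolding h_def by (simp add: le_divide_eq mult.commute)
      have dh: "\<delta> < 2 * real DIM('a) * h" using n2 N1 unfolding h_def by (simp add: divide_less_eq mult.commute)
      obtain K where K: "\<And>j. j \<ge> K \<Longrightarrow> t (r j) < \<delta>"
        using order_tendstoD(2)[OF trl, of \<delta>] \<delta> by (auto simp: eventually_sequentially)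
      define X where "X = \<eta> * \<delta> ^ DIM('a) / (\<omega> * (h/2) ^ DIM('a))"
      have X0: "0 \<le> X" unfolding X_def using eta \<delta> om h by simp
      have Xle: "X \<le> e / (max C 0 + 1)"
      proof -
        have "\<delta> \<le> 2 * (h * real DIM('a))" using dh by (simp add: mult.commute mult.left_commute)
        then have "\<delta> / (h/2) \<le> 4 * real DIM('a)" using h by (simp add: divide_le_eq mult.commute mult.left_commute)
        then have RA: "(\<delta> / (h/2)) ^ DIM('a) \<le> Q" unfolding Q_def using \<delta> h by (intro power_mono) auto
        have XE: "X = \<eta> / \<omega> * (\<delta> / (h/2)) ^ DIM('a)" unfolding X_def by (simp add: power_divide)
        have "X \<le> \<eta> / \<omega> * Q" unfolding XE by (rule mult_left_mono[OF RA]) (use eta om in simp)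
        also have "\<eta> / \<omega> * Q = e / (max C 0 + 1)"
        proof -
          have "\<eta> / \<omega> * Q = e / m" unfolding \<eta>_def using om Q m by (simp add: field_simps)
          then show ?thesis unfolding m_def .
        qed
        finally show ?thesis .
      qed
      have XC: "ennreal X * ennreal C \<le> ennreal e"
      proof -
        have "ennreal C = ennreal (max C 0)" by (simp add: max_def ennreal_neg)
        then have eq: "ennreal X * ennreal C = ennreal (X * max C 0)" using X0 by (simp add: ennreal_mult)
        have "X * max C 0 \<le> e / (max C 0 + 1) * max C 0" using Xle by (intro mult_right_mono) auto
        also have "e / (max C 0 + 1) * max C 0 \<le> e"
        proof -
          have "max C 0 / (max C 0 + 1) \<le> 1" by simp
          then have "e * (max C 0 / (max C 0 + 1)) \<le> e * 1" using e by (intro mult_left_mono) auto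
          then show ?thesis by simp
        qed
        finally have "X * max C 0 \<le> e" .
        then show ?thesis unfolding eq by (rule ennreal_leI)
      qed
      show ?thesis
      proof (intro exI allI impI)
        fix j assume j: "K \<le> j"
        have sj: "t (r j) \<in> {0<..<\<delta>}" using K[OF j] tpos[of "r j"] by simp
        have "Lp_dist_on p E (u (r j)) (Pr h E (u (r j))) \<le> ennreal X * F_tp \<rho> (t (r j)) p (u (r j))"
          unfolding F_tp_def X_def \<omega>_def
          by (rule est_F[OF p um ufin rho_m[OF t_in] rho_nonneg[OF t_in] h hd eta
                low[rule_format, OF sj] ckey_finite[OF h E]])
        also have "\<dots> \<le> ennreal X * ennreal C" by (rule mult_left_mono[OF Fb]) simp
        also have "\<dots> \<le> ennreal e" by (rule XC)
        finally show "Lp_dist_on p E (u (r j)) (Pr ((1/2)^n) E (u (r j))) \<le> ennreal e"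
          unfolding h_def .
      qed
    qed
    have "\<exists>s v. strict_mono s \<and> v \<in> borel_measurable lebesgue \<and>
        (\<integral>\<^sup>+x\<in>E. ennreal (\<bar>v x\<bar> powr p) \<partial>lebesgue) < \<infinity> \<and>
        (\<lambda>j. Lp_dist_on p E ((\<lambda>j. u (r j)) (s j)) v) \<longlonglongrightarrow> 0"
      by (rule part1[of p E "\<lambda>j. u (r j)" M, OF p E um M0 ub key])
    then show "\<exists>s v. strict_mono s \<and> v \<in> borel_measurable lebesgue \<and>
        (\<integral>\<^sup>+x\<in>E. ennreal (\<bar>v x\<bar> powr p) \<partial>lebesgue) < \<infinity> \<and>
        (\<lambda>j. Lp_dist_on p E (u (r (s j))) v) \<longlonglongrightarrow> 0" by simp
  qed
  have P2: "\<forall>(r::nat\<Rightarrow>nat) w. strict_mono r \<and> in_Lp_loc p w \<and>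
        (\<forall>E. compact E \<longrightarrow> (\<lambda>j. Lp_dist_on p E (u (r j)) w) \<longlonglongrightarrow> 0) \<longrightarrow>
      in_W_kernel (\<lambda>z. Liminf (at_right 0) (\<lambda>s. ennreal (\<rho> s z / norm z powr p))) p w"
  proof (intro allI impI)
    fix r :: "nat \<Rightarrow> nat" and w :: "'a \<Rightarrow> real"
    assume H: "strict_mono r \<and> in_Lp_loc p w \<and>
        (\<forall>E. compact E \<longrightarrow> (\<lambda>j. Lp_dist_on p E (u (r j)) w) \<longlonglongrightarrow> 0)"
    then have r: "strict_mono r" and wl: "in_Lp_loc p w"
      and conv: "\<And>E. compact E \<Longrightarrow> (\<lambda>j. Lp_dist_on p E (u (r j)) w) \<longlonglongrightarrow> 0" by auto
    have wm: "w \<in> borel_measurable lebesgue" using wl unfolding in_Lp_loc_def by blast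
    obtain s where s: "strict_mono s" and ae: "AE x in lebesgue. (\<lambda>j. u (r (s j)) x) \<longlonglongrightarrow> w x"
      using AEsub[of p "\<lambda>j. u (r j)" w, OF p um wm conv] by blast
    have wLp: "in_Lp p w"
    proof -
      have "(\<integral>\<^sup>+x. ennreal (\<bar>w x\<bar> powr p) \<partial>lebesgue)
          = (\<integral>\<^sup>+x. liminf (\<lambda>j. ennreal (\<bar>u (r (s j)) x\<bar> powr p)) \<partial>lebesgue)"
      proof (rule nn_integral_cong_AE)
        show "AE x in lebesgue. ennreal (\<bar>w x\<bar> powr p) = liminf (\<lambda>j. ennreal (\<bar>u (r (s j)) x\<bar> powr p))"
          using ae
        proof eventually_elim
          case (elim x)
          have "(\<lambda>j. \<bar>u (r (s j)) x\<bar>) \<longlonglongrightarrow> \<bar>w x\<bar>" by (intro tendsto_intros elim)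
          then have "(\<lambda>j. \<bar>u (r (s j)) x\<bar> powr p) \<longlonglongrightarrow> \<bar>w x\<bar> powr p"
            using p by (intro tendsto_powr') auto
          then have "(\<lambda>j. ennreal (\<bar>u (r (s j)) x\<bar> powr p)) \<longlonglongrightarrow> ennreal (\<bar>w x\<bar> powr p)"
            by (rule tendsto_ennrealI)
          then show ?case by (intro lim_imp_Liminf[symmetric]) auto
        qed
      qed
      also have "\<dots> \<le> liminf (\<lambda>j. \<integral>\<^sup>+x. ennreal (\<bar>u (r (s j)) x\<bar> powr p) \<partial>lebesgue)"
        by (rule nn_integral_liminf) (use um in measurable)
      also have "\<dots> \<le> ennreal M"
        by (rule Liminf_le) (use ub in auto)
      finally have "(\<integral>\<^sup>+x. ennreal (\<bar>w x\<bar> powr p) \<partial>lebesgue) < \<infinity>" by (simp add: le_less_trans)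
      then show ?thesis unfolding in_Lp_def using wm by blast
    qed
    have rs: "strict_mono (r \<circ> s)" using r s by (rule strict_mono_o)
    have tl2: "(\<lambda>j. t (r (s j))) \<longlonglongrightarrow> 0" using LIMSEQ_subseq_LIMSEQ[OF t_lim rs] by (simp add: o_def)
    have kb: "(\<integral>\<^sup>+x. \<integral>\<^sup>+y. ennreal (\<bar>w x - w y\<bar> powr p) *
        Liminf (at_right 0) (\<lambda>s. ennreal (\<rho> s (x - y) / norm (x - y) powr p)) \<partial>lebesgue \<partial>lebesgue) \<le> ennreal C"
      by (rule kernel_bound[of p "\<lambda>j. u (r (s j))" w "\<lambda>j. t (r (s j))" \<rho> C,
            OF p um ae tl2 tpos rho_m[OF t_in] rho_nonneg[OF t_in] Fb])
    show "in_W_kernel (\<lambda>z. Liminf (at_right 0) (\<lambda>s. ennreal (\<rho> s z / norm z powr p))) p w"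
      unfolding in_W_kernel_def using wLp kb by (simp add: le_less_trans)
  qed
  show ?thesis using P1 P2 by blast
qed

end
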